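(* Let $\mathcal{L}=(n,\mathcal{M},\mathcal{C})$ be a simple linearization and let $\mathcal{T}\subseteq\mathcal{P}$. Suppose $D(\mathcal{L})$ has a subgraph satisfying (a) its underlying undirected graph is a cycle and (b) its node set is contained in $\mathrm{succ}(\mathcal{T})$. Then $D(\mathcal{L})$ has a subgraph $Z$ satisfying (a) and (b) such that either $|U(Z)|=1$, or $Z$ satisfies all of the following: (c) for all $s\in\mathcal{S}$ and $t\in\mathcal{T}$ there is at most one directed $t$-$s$-path in $D(\mathcal{L})$; (d) $|\mathrm{pred}(s)\cap L(Z)|\le1$ for all $s\in\mathcal{S}$; (e) $|\mathrm{succ}(t)\cap U(Z)|\le1$ for all $t\in\mathcal{T}$.
   Context: $[n]=\{1,\dots,n\}$; a monomial is a nonempty subset of $[n]$; $\mathcal{S}=\{\{i\}:i\in[n]\}$. A linearization is a triple $\mathcal{L}=(n,\mathcal{M},\mathcal{C})$, where $\mathcal{M}$ is a set of monomials with $\mathcal{S}\subseteq\mathcal{M}$ and $\mathcal{C}$ is a set of AND-constraints; each AND-constraint is a set $c\subseteq\mathcal{M}$ whose union $\bigcup c$ (resultant) lies in $\mathcal{M}$. $\mathcal{P}=\mathcal{M}\setminus\mathcal{S}$. Linearizations are consistent: each $m\in\mathcal{P}$ is the resultant of some $c$ with $|m'|<|m|$ for all $m'\in c$. $\mathcal{L}$ is simple if each proper monomial is the resultant of exactly one AND-constraint and $|\mathcal{C}|=|\mathcal{P}|$. $D(\mathcal{L})$ has node set $\mathcal{M}$ and, for each $c\in\mathcal{C}$,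 arcs from $\bigcup c$ to each $m\in c$. Cycles are simple cycles. $\mathrm{succ}(W)$ (resp. $\mathrm{pred}(W)$) is the set of nodes of $D(\mathcal{L})$ reachable from (resp. from which one can reach) a node of $W$ by a directed path, including $W$; for a node $w$, $\mathrm{succ}(w)=\mathrm{succ}(\{w\})$ and $\mathrm{pred}(w)=\mathrm{pred}(\{w\})$. For a subgraph $Z$, $U(Z)$ is the set of nodes with out-degree at least $2$ in $Z$ (upper nodes) and $L(Z)$ the set of nodes with in-degree at least $2$ in $Z$ (lower nodes). *)

theory Defs
  imports Main
begin

type_synonym monomial = "nat set"

definition singletons :: "nat \<Rightarrow> monomial set" where
  "singletons n = {{i} | i. i \<in> {1..n}}"

definition proper_monomials :: "nat \<Rightarrow> monomial set \<Rightarrow> monomial set" where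
  "proper_monomials n M = M - singletons n"

definition linearization :: "nat \<Rightarrow> monomial set \<Rightarrow> monomial set set \<Rightarrow> bool" where
  "linearization n M C \<longleftrightarrow>
     (\<forall>m\<in>M. m \<noteq> {} \<and> m \<subseteq> {1..n}) \<and>
     singletons n \<subseteq> M \<and>
     (\<forall>c\<in>C. c \<subseteq> M \<and> \<Union>c \<in> M) \<and>
     (\<forall>m\<in>proper_monomials n M. \<exists>c\<in>C. \<Union>c = m \<and> (\<forall>m'\<in>c. card m' < card m))"

definition simple_linearization :: "nat \<Rightarrow> monomial set \<Rightarrow> monomial set set \<Rightarrow> bool" where
  "simple_linearization n M C \<longleftrightarrow>
     linearization n M C \<and>
     (\<forall>m\<in>proper_monomials n M. \<exists>!c. c \<in> C \<and> \<Union>c = m) \<and>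
     card C = card (proper_monomials n M)"

text \<open>Arc set of D(L): for each AND-constraint c, arcs from its resultant to each member.\<close>
definition arcs :: "monomial set set \<Rightarrow> (monomial \<times> monomial) set" where
  "arcs C = {(\<Union>c, m) | c m. c \<in> C \<and> m \<in> c}"

definition succs :: "monomial set set \<Rightarrow> monomial set \<Rightarrow> monomial set" where
  "succs C W = {v. \<exists>w\<in>W. (w, v) \<in> (arcs C)\<^sup>*}"

definition preds :: "monomial set set \<Rightarrow> monomial set \<Rightarrow> monomial set" where
  "preds C W = {v. \<exists>w\<in>W. (v, w) \<in> (arcs C)\<^sup>*}"

definition is_subgraph :: "monomial set \<Rightarrow> monomial set set \<Rightarrow>
    monomial set \<Rightarrow> (monomial \<times> monomial) set \<Rightarrow> bool" where
  "is_subgraph M C V E \<longleftrightarrow> V \<subseteq> M \<and> E \<subseteq> arcs C \<and>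
     (\<forall>(a,b)\<in>E. a \<in> V \<and> b \<in> V)"

definition undirected_cycle :: "'a set \<Rightarrow> ('a \<times> 'a) set \<Rightarrow> bool" where
  "undirected_cycle V E \<longleftrightarrow>
     (\<exists>vs. distinct vs \<and> length vs \<ge> 3 \<and> set vs = V \<and>
        inj_on (\<lambda>(a,b). {a,b}) E \<and>
        (\<lambda>(a,b). {a,b}) ` E =
          {{vs ! i, vs ! (Suc i mod length vs)} | i. i < length vs})"

definition upper_nodes :: "'a set \<Rightarrow> ('a \<times> 'a) set \<Rightarrow> 'a set" where
  "upper_nodes V E = {v\<in>V. card {w. (v, w) \<in> E} \<ge> 2}"

definition lower_nodes :: "'a set \<Rightarrow> ('a \<times> 'a) set \<Rightarrow> 'a set" where
  "lower_nodes V E = {v\<in>V. card {u. (u, v) \<in> E} \<ge> 2}"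

definition dpath :: "('a \<times> 'a) set \<Rightarrow> 'a list \<Rightarrow> bool" where
  "dpath A p \<longleftrightarrow> p \<noteq> [] \<and> distinct p \<and>
     (\<forall>i. Suc i < length p \<longrightarrow> (p ! i, p ! Suc i) \<in> A)"

end

theory Submission
  imports Defs
begin


definition adj :: "('a \<times> 'a) set \<Rightarrow> 'a \<Rightarrow> 'a \<Rightarrow> bool" where
  "adj A a b \<longleftrightarrow> (a,b) \<in> A \<or> (b,a) \<in> A"

definition cP :: "'a list \<Rightarrow> 'a set set" where
  "cP cs = {{cs!i, cs!(Suc i mod length cs)} | i. i < length cs}"

definition nbrs :: "'a list \<Rightarrow> 'a \<Rightarrow> 'a set" where
  "nbrs cs v = {w. {v,w} \<in> cP cs}"

lemma modpred: "0 < p \<Longrightarrow> p < n \<Longrightarrow> (p + n - 1) mod n = p - (1::nat)"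
proof -
  assume a: "0 < p" "p < n"
  then have "p + n - 1 = (p - 1) + n" by simp
  then have "(p + n - 1) mod n = (p - 1) mod n" by simp
  then show ?thesis using a by simp
qed

lemma modpred0: "0 < n \<Longrightarrow> (0 + n - 1) mod n = n - (1::nat)"
  by simp

lemma sucmod_ne: "i < n \<Longrightarrow> 2 \<le> n \<Longrightarrow> Suc i mod n \<noteq> (i::nat)"
  by (cases "Suc i < n") (auto simp: mod_if)

lemma nb_idx:
  assumes "cs = pre @ v # post" "2 \<le> length cs"
  shows "cs!(Suc (length pre) mod length cs) = hd(post@pre)"
    and "cs!((length pre + length cs - 1) mod length cs) = last(post@pre)"
proof -
  show "cs!(Suc (length pre) mod length cs) = hd(post@pre)"
  proof (cases post)
    case Nil
    then have "Suc (length pre) mod length cs = 0" using assms by simp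
    moreover have "pre \<noteq> []" using assms Nil by auto
    ultimately show ?thesis using assms Nil by (cases pre) auto
  next
    case (Cons a l)
    then show ?thesis using assms by (simp add: nth_append)
  qed
  show "cs!((length pre + length cs - 1) mod length cs) = last(post@pre)"
  proof (cases pre rule: rev_cases)
    case Nil
    then have "(length pre + length cs - 1) mod length cs = length cs - 1" using assms by simp
    moreover have "post \<noteq> []" using assms Nil by auto
    ultimately show ?thesis using assms Nil by (simp add: last_conv_nth)
  next
    case (snoc l a)
    then have "(length pre + length cs - 1) mod length cs = length l"
      using assms modpred[of "length pre" "length cs"] by simp
    then show ?thesis using assms snoc by (simp add: nth_append)
  qed
qed

lemma nbrs_decomp:
  assumes "distinct cs" "3 \<le> length cs" "cs = pre @ v # post"
  shows "nbrs cs v = {hd(post@pre), last(post@pre)}" "hd(post@pre) \<noteq> last(post@pre)"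
proof -
  let ?n = "length cs" let ?p = "length pre"
  have vp: "cs ! ?p = v" using assms by simp
  have pn: "?p < ?n" using assms by simp
  have h: "cs!(Suc ?p mod ?n) = hd(post@pre)" and l: "cs!((?p + ?n - 1) mod ?n) = last(post@pre)"
    using nb_idx[OF assms(3)] assms(2) by auto
  have pm: "(?p + ?n - 1) mod ?n = (if ?p = 0 then ?n - 1 else ?p - 1)"
    using modpred[of ?p ?n] pn by auto
  have ne: "Suc ?p mod ?n \<noteq> (?p + ?n - 1) mod ?n"
  proof (cases "Suc ?p < ?n")
    case True
    then show ?thesis using pn assms(2) pm by auto
  next
    case False
    then have "Suc ?p = ?n" using pn by simp
    then show ?thesis using assms(2) pm by auto
  qed
  have i1: "Suc ?p mod ?n < ?n" "(?p + ?n - 1) mod ?n < ?n" using pn by (auto intro: mod_less_divisor)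
  have ne1: "Suc ?p mod ?n \<noteq> ?p"
  proof (cases "Suc ?p < ?n")
    case True then show ?thesis by simp
  next
    case False then have "Suc ?p = ?n" using pn by simp
    then show ?thesis using assms(2) by (cases pre) auto
  qed
  have ne2: "(?p + ?n - 1) mod ?n \<noteq> ?p" using assms(2) pn pm by auto
  show "hd(post@pre) \<noteq> last(post@pre)"
    using h l ne i1 assms(1) by (metis nth_eq_iff_index_eq)
  show "nbrs cs v = {hd(post@pre), last(post@pre)}"
  proof
    show "nbrs cs v \<subseteq> {hd(post@pre), last(post@pre)}"
    proof
      fix w assume "w \<in> nbrs cs v"
      then obtain i where i: "i < ?n" "{v,w} = {cs!i, cs!(Suc i mod ?n)}"
        unfolding nbrs_def cP_def by auto
      have si: "Suc i mod ?n < ?n" using i by (auto intro: mod_less_divisor)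
      have "Suc i mod ?n \<noteq> i" using sucmod_ne[of i ?n] i assms(2) by simp
      then have dd: "cs!i \<noteq> cs!(Suc i mod ?n)"
        using assms(1,2) i si by (simp add: nth_eq_iff_index_eq)
      show "w \<in> {hd(post@pre), last(post@pre)}"
      proof (cases "cs!i = v")
        case True
        then have "i = ?p" using vp assms(1) i pn by (metis nth_eq_iff_index_eq)
        then have "w = cs!(Suc i mod ?n)" using i True dd by (metis doubleton_eq_iff)
        then show ?thesis using h \<open>i = ?p\<close> by simp
      next
        case False
        have "v = cs!(Suc i mod ?n) \<and> w = cs!i" using i(2) False by (metis doubleton_eq_iff)
        then have "cs!(Suc i mod ?n) = v" "w = cs!i" by auto
        then have sp: "Suc i mod ?n = ?p" using vp assms(1) si pn by (metis nth_eq_iff_index_eq)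
        have "i = (?p + ?n - 1) mod ?n"
        proof (cases "Suc i < ?n")
          case True then show ?thesis using sp pm by (cases pre) auto
        next
          case False then have "Suc i = ?n" using i(1) by simp
          then show ?thesis using sp pm by (cases pre) auto
        qed
        then show ?thesis using \<open>w = cs!i\<close> l by auto
      qed
    qed
  next
    have "{v, hd(post@pre)} = {cs!?p, cs!(Suc ?p mod ?n)}" using h vp by simp
    then have "{v, hd(post@pre)} \<in> cP cs" unfolding cP_def using pn by blast
    moreover have "{v, last(post@pre)} \<in> cP cs" unfolding cP_def
    proof -
      let ?i = "(?p + ?n - 1) mod ?n"
      have "Suc ?i mod ?n = ?p"
      proof (cases pre)
        case Nil
        have "Suc (?n - 1) = ?n" using assms(2) by simp
        then show ?thesis using pm Nil by simp
      next
        case (Cons a l) then show ?thesis using pm pn by simp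
      qed
      then have "{v, last(post@pre)} = {cs!?i, cs!(Suc ?i mod ?n)}" using l vp by (simp add: insert_commute)
      moreover have "?i < ?n" using i1 by simp
      ultimately show "{v, last(post@pre)} \<in> {{cs!i, cs!(Suc i mod length cs)} | i. i < length cs}" by blast
    qed
    ultimately show "{hd(post@pre), last(post@pre)} \<subseteq> nbrs cs v" unfolding nbrs_def by blast
  qed
qed



definition cycE :: "('a \<times> 'a) set \<Rightarrow> 'a list \<Rightarrow> ('a \<times> 'a) set" where
  "cycE A cs = {(a,b). (a,b) \<in> A \<and> {a,b} \<in> cP cs}"

definition cyc :: "('a \<times> 'a) set \<Rightarrow> 'a list \<Rightarrow> bool" where
  "cyc A cs \<longleftrightarrow> distinct cs \<and> 3 \<le> length cs \<and> successively (adj A) (cs @ [hd cs])"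

abbreviation UU where "UU A cs \<equiv> upper_nodes (set cs) (cycE A cs)"
abbreviation LL where "LL A cs \<equiv> lower_nodes (set cs) (cycE A cs)"

lemma out_set: "{w. (v,w) \<in> cycE A cs} = {w \<in> nbrs cs v. (v,w) \<in> A}"
  unfolding cycE_def nbrs_def by auto

lemma in_set: "{u. (u,v) \<in> cycE A cs} = {u \<in> nbrs cs v. (u,v) \<in> A}"
  unfolding cycE_def nbrs_def by (auto simp: insert_commute)

lemma card2: "h \<noteq> l \<Longrightarrow> (2 \<le> card {w \<in> {h,l}. P w}) \<longleftrightarrow> P h \<and> P l"
proof -
  assume hl: "h \<noteq> l"
  have "{w \<in> {h,l}. P w} = (if P h then {h} else {}) \<union> (if P l then {l} else {})" by auto
  then show ?thesis using hl by (auto simp: card_insert_if)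
qed

lemma UP:
  assumes "distinct cs" "3 \<le> length cs" "cs = pre @ v # post"
  shows "v \<in> UU A cs \<longleftrightarrow> (v, hd(post@pre)) \<in> A \<and> (v, last(post@pre)) \<in> A"
proof -
  have "v \<in> set cs" using assms by simp
  then have "v \<in> UU A cs \<longleftrightarrow> 2 \<le> card {w \<in> {hd(post@pre), last(post@pre)}. (v,w) \<in> A}"
    unfolding upper_nodes_def out_set using nbrs_decomp(1)[OF assms] by simp
  then show ?thesis using card2[OF nbrs_decomp(2)[OF assms]] by simp
qed

lemma LOW:
  assumes "distinct cs" "3 \<le> length cs" "cs = pre @ v # post"
  shows "v \<in> LL A cs \<longleftrightarrow> (hd(post@pre), v) \<in> A \<and> (last(post@pre), v) \<in> A"
proof -
  have "v \<in> set cs" using assms by simp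
  then have "v \<in> LL A cs \<longleftrightarrow> 2 \<le> card {w \<in> {hd(post@pre), last(post@pre)}. (w,v) \<in> A}"
    unfolding lower_nodes_def in_set using nbrs_decomp(1)[OF assms] by simp
  then show ?thesis using card2[OF nbrs_decomp(2)[OF assms]] by simp
qed

lemma UPn:
  assumes "distinct cs" "3 \<le> length cs"
  shows "v \<in> UU A cs \<longleftrightarrow> v \<in> set cs \<and> (\<forall>w\<in>nbrs cs v. (v,w) \<in> A)"
proof (cases "v \<in> set cs")
  case True
  then obtain pre post where d: "cs = pre @ v # post" by (meson split_list)
  show ?thesis using UP[OF assms d] nbrs_decomp[OF assms d] True by auto
next
  case False then show ?thesis unfolding upper_nodes_def by auto
qed

lemma LOWn:
  assumes "distinct cs" "3 \<le> length cs"
  shows "v \<in> LL A cs \<longleftrightarrow> v \<in> set cs \<and> (\<forall>w\<in>nbrs cs v. (w,v) \<in> A)"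
proof (cases "v \<in> set cs")
  case True
  then obtain pre post where d: "cs = pre @ v # post" by (meson split_list)
  show ?thesis using LOW[OF assms d] nbrs_decomp[OF assms d] True by auto
next
  case False then show ?thesis unfolding lower_nodes_def by auto
qed

lemma cyc_idx:
  "cyc A cs \<longleftrightarrow> distinct cs \<and> 3 \<le> length cs \<and> (\<forall>i<length cs. adj A (cs!i) (cs!(Suc i mod length cs)))"
proof -
  have "successively (adj A) (cs @ [hd cs]) \<longleftrightarrow> (\<forall>i<length cs. adj A (cs!i) (cs!(Suc i mod length cs)))"
    if "3 \<le> length cs"
  proof -
    have e: "(cs @ [hd cs]) ! i = cs ! i" "(cs @ [hd cs]) ! Suc i = cs!(Suc i mod length cs)"
      if "i < length cs" for i
      using that \<open>3 \<le> length cs\<close>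
      by (auto simp: nth_append mod_if hd_conv_nth)
    show ?thesis unfolding successively_conv_nth using e by auto
  qed
  then show ?thesis unfolding cyc_def by auto
qed

lemma nbrs_adj: "cyc A cs \<Longrightarrow> w \<in> nbrs cs v \<Longrightarrow> adj A v w"
  unfolding nbrs_def cP_def cyc_idx
  by (auto simp: adj_def doubleton_eq_iff)

lemma nbrs_in: "w \<in> nbrs cs v \<Longrightarrow> w \<in> set cs \<and> v \<in> set cs"
proof -
  assume "w \<in> nbrs cs v"
  then obtain i where i: "i < length cs" "{v,w} = {cs!i, cs!(Suc i mod length cs)}"
    unfolding nbrs_def cP_def by auto
  have "Suc i mod length cs < length cs" using i by (auto intro: mod_less_divisor)
  then have "cs!i \<in> set cs" "cs!(Suc i mod length cs) \<in> set cs" using i by auto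
  then show ?thesis using i(2) by (auto simp: doubleton_eq_iff)
qed

definition asy :: "('a \<times> 'a) set \<Rightarrow> bool" where
  "asy A \<longleftrightarrow> (\<forall>a b. (a,b) \<in> A \<longrightarrow> (b,a) \<notin> A)"

lemma cyc_undirected:
  assumes "cyc A cs" "asy A"
  shows "undirected_cycle (set cs) (cycE A cs)"
proof -
  have inj: "inj_on (\<lambda>(a,b). {a,b}) (cycE A cs)"
    using assms(2) unfolding inj_on_def cycE_def asy_def by (auto simp: doubleton_eq_iff)
  have img: "(\<lambda>(a,b). {a,b}) ` (cycE A cs) = cP cs"
  proof
    show "(\<lambda>(a,b). {a,b}) ` (cycE A cs) \<subseteq> cP cs" unfolding cycE_def by auto
  next
    show "cP cs \<subseteq> (\<lambda>(a,b). {a,b}) ` (cycE A cs)"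
    proof
      fix x assume "x \<in> cP cs"
      then obtain i where i: "i < length cs" "x = {cs!i, cs!(Suc i mod length cs)}" unfolding cP_def by auto
      then have "adj A (cs!i) (cs!(Suc i mod length cs))" using assms(1) unfolding cyc_idx by auto
      then show "x \<in> (\<lambda>(a,b). {a,b}) ` (cycE A cs)"
        unfolding adj_def
      proof
        assume "(cs!i, cs!(Suc i mod length cs)) \<in> A"
        then have "(cs!i, cs!(Suc i mod length cs)) \<in> cycE A cs"
          unfolding cycE_def using \<open>x \<in> cP cs\<close> i(2) by simp
        then show ?thesis using i(2) by force
      next
        assume "(cs!(Suc i mod length cs), cs!i) \<in> A"
        then have "(cs!(Suc i mod length cs), cs!i) \<in> cycE A cs"
          unfolding cycE_def using \<open>x \<in> cP cs\<close> i(2) by (simp add: insert_commute)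
        then show ?thesis using i(2) by (force simp: insert_commute)
      qed
    qed
  qed
  show ?thesis unfolding undirected_cycle_def
    using assms(1) inj img unfolding cyc_def cP_def by blast
qed




definition peaks :: "('a \<times> 'a) set \<Rightarrow> 'a list \<Rightarrow> 'a set" where
  "peaks A q = {q!i | i. 0 < i \<and> Suc i < length q \<and> (q!i, q!(i-1)) \<in> A \<and> (q!i, q!Suc i) \<in> A}"

lemma peak_decomp:
  assumes "qs = qa @ v # qb" "(v, last(z1#qa)) \<in> A" "(v, hd(qb@[z2])) \<in> A"
  shows "v \<in> peaks A (z1 # qs @ [z2])"
proof -
  let ?q = "z1 # qs @ [z2]" let ?i = "Suc (length qa)"
  have a: "?q ! ?i = v" using assms(1) by (simp add: nth_append)
  have b: "?q ! (?i - 1) = last(z1#qa)"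
    using assms(1) by (cases qa rule: rev_cases) (auto simp: nth_append)
  have c: "?q ! Suc ?i = hd(qb@[z2])"
    using assms(1) by (cases qb) (auto simp: nth_append)
  have "Suc ?i < length ?q" using assms(1) by simp
  then show ?thesis unfolding peaks_def using a b c assms by (intro CollectI exI[of _ ?i]) auto
qed

lemma hd_app: "hd (xs @ a # ys) = hd (xs @ [a])" by (cases xs) auto

lemma succ_infix: "successively P (xs @ ys @ zs) \<Longrightarrow> successively P ys"
  by (simp add: successively_append_iff)

lemma adj_sym: "adj A a b = adj A b a" unfolding adj_def by auto

lemma succ_adj_rev: "successively (adj A) (rev xs) = successively (adj A) xs"
proof -
  have e: "(\<lambda>x y. adj A y x) = adj A" by (auto simp: adj_def fun_eq_iff)
  show ?thesis unfolding successively_rev e by (rule refl)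
qed

lemma succ_join: "successively P (xs @ [x]) \<Longrightarrow> successively P (x # ys) \<Longrightarrow> successively P (xs @ x # ys)"
  by (auto simp: successively_append_iff successively_Cons)

lemma split_main:
  assumes cy: "cyc A vs" and vs: "vs = pre @ z1 # mid @ z2 # post"
    and dq: "distinct qs" and dj: "set qs \<inter> set vs = {}"
    and sq: "successively (adj A) (z1 # qs @ [z2])"
    and nq: "qs \<noteq> [] \<or> z2 \<notin> nbrs vs z1"
  shows "cyc A (z1 # mid @ z2 # rev qs)"
    and "cyc A (z2 # post @ pre @ z1 # qs)"
    and "nbrs vs z1 = {hd(mid@[z2]), last(z2#post@pre)}"
    and "nbrs vs z2 = {last(z1#mid), hd(post@pre@[z1])}"
    and "UU A (z1 # mid @ z2 # rev qs) \<subseteq> (UU A vs \<inter> set mid) \<union> peaks A (z1 # qs @ [z2])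
          \<union> {v. v = z1 \<and> (z1, hd(qs@[z2])) \<in> A \<and> (z1, hd(mid@[z2])) \<in> A}
          \<union> {v. v = z2 \<and> (z2, last(z1#qs)) \<in> A \<and> (z2, last(z1#mid)) \<in> A}"
    and "UU A (z2 # post @ pre @ z1 # qs) \<subseteq> (UU A vs \<inter> set (post@pre)) \<union> peaks A (z1 # qs @ [z2])
          \<union> {v. v = z1 \<and> (z1, hd(qs@[z2])) \<in> A \<and> (z1, last(z2#post@pre)) \<in> A}
          \<union> {v. v = z2 \<and> (z2, last(z1#qs)) \<in> A \<and> (z2, hd(post@pre@[z1])) \<in> A}"
proof -
  let ?C1 = "z1 # mid @ z2 # rev qs" let ?C2 = "z2 # post @ pre @ z1 # qs"
  have dv: "distinct vs" and lv: "3 \<le> length vs" and sv: "successively (adj A) (vs @ [hd vs])"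
    using cy unfolding cyc_def by auto
  have hm: "hd(mid @ z2 # post @ pre) = hd(mid@[z2])" by (cases mid) auto
  have n1: "nbrs vs z1 = {hd(mid@[z2]), last(z2#post@pre)}"
    using nbrs_decomp(1)[OF dv lv, of pre z1 "mid @ z2 # post"] vs hm by simp
  have hp: "hd(post @ pre @ z1 # mid) = hd(post@pre@[z1])" using hd_app[of "post@pre" z1 mid] by simp
  have n2: "nbrs vs z2 = {last(z1#mid), hd(post@pre@[z1])}"
    using hp  nbrs_decomp(1)[OF dv lv, of "pre @ z1 # mid" z2 post] vs by (simp add: insert_commute)
  show "nbrs vs z1 = {hd(mid@[z2]), last(z2#post@pre)}" by (fact n1)
  show "nbrs vs z2 = {last(z1#mid), hd(post@pre@[z1])}" by (fact n2)
  have m1: "qs \<noteq> [] \<or> mid \<noteq> []" using nq n1 by (cases mid) auto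
  have m2: "qs \<noteq> [] \<or> post @ pre \<noteq> []" using nq n1 by (cases "post @ pre") auto
  have dvv: "distinct (pre @ z1 # mid @ z2 # post)" using dv vs by simp
  have sv2: "set vs = set pre \<union> {z1} \<union> set mid \<union> {z2} \<union> set post" using vs by auto
  have qx: "z1 \<notin> set qs" "z2 \<notin> set qs" "set mid \<inter> set qs = {}" "set pre \<inter> set qs = {}"
    "set post \<inter> set qs = {}" using dj sv2 by blast+
  have dx: "z1 \<notin> set mid" "z2 \<notin> set mid" "z1 \<noteq> z2" "distinct mid" "distinct pre" "distinct post"
    "z1 \<notin> set pre" "z1 \<notin> set post" "z2 \<notin> set pre" "z2 \<notin> set post"
    "set pre \<inter> set post = {}" using dvv by auto
  have dC1: "distinct ?C1" using dx qx dq by (auto simp: disjoint_iff)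
  have dC2: "distinct ?C2" using dx qx dq by (auto simp: disjoint_iff)
  have lC1: "3 \<le> length ?C1" using m1 by (auto simp: Suc_le_eq)
  have lC2: "3 \<le> length ?C2" using m2 by (auto simp: Suc_le_eq)
  have hv: "hd vs = hd (pre @ [z1])" using vs by (cases pre) auto
  have s_a: "successively (adj A) (z1 # mid @ [z2])"
    using succ_infix[of "adj A" pre "z1 # mid @ [z2]" "post @ [hd vs]"] sv vs by simp
  have s_b: "successively (adj A) (z2 # post @ [hd (pre @ [z1])])"
    using succ_infix[of "adj A" "pre @ z1 # mid" "z2 # post @ [hd vs]" "[]"] sv vs hv by simp
  have s_c: "successively (adj A) (pre @ [z1])"
    using succ_infix[of "adj A" "[]" "pre @ [z1]" "mid @ z2 # post @ [hd vs]"] sv vs by simp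
  have s_d: "successively (adj A) (z2 # post @ pre @ [z1])"
  proof (cases pre)
    case Nil then show ?thesis using s_b by simp
  next
    case (Cons a l)
    have "successively (adj A) ((z2 # post) @ [a])" using s_b Cons by simp
    moreover have "successively (adj A) (a # l @ [z1])" using s_c Cons by simp
    ultimately show ?thesis using succ_join[of "adj A" "z2 # post" a "l @ [z1]"] Cons by simp
  qed
  have s_q: "successively (adj A) (z2 # rev qs @ [z1])"
    using sq succ_adj_rev[of A "z1 # qs @ [z2]"] by simp
  have "successively (adj A) (?C1 @ [hd ?C1])"
    using succ_join[of "adj A" "z1 # mid" z2 "rev qs @ [z1]"] s_a s_q by simp
  then show cC1: "cyc A ?C1" unfolding cyc_def using dC1 lC1 by simp
  have "successively (adj A) (?C2 @ [hd ?C2])"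
    using succ_join[of "adj A" "z2 # post @ pre" z1 "qs @ [z2]"] s_d sq by simp
  then show cC2: "cyc A ?C2" unfolding cyc_def using dC2 lC2 by simp
  show "UU A ?C1 \<subseteq> (UU A vs \<inter> set mid) \<union> peaks A (z1 # qs @ [z2])
          \<union> {v. v = z1 \<and> (z1, hd(qs@[z2])) \<in> A \<and> (z1, hd(mid@[z2])) \<in> A}
          \<union> {v. v = z2 \<and> (z2, last(z1#qs)) \<in> A \<and> (z2, last(z1#mid)) \<in> A}"
  proof
    fix v assume vU: "v \<in> UU A ?C1"
    then have "v \<in> set ?C1" unfolding upper_nodes_def by auto
    then consider "v = z1" | "v = z2" | "v \<in> set mid" | "v \<in> set qs" by auto
    then show "v \<in> (UU A vs \<inter> set mid) \<union> peaks A (z1 # qs @ [z2])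
          \<union> {v. v = z1 \<and> (z1, hd(qs@[z2])) \<in> A \<and> (z1, hd(mid@[z2])) \<in> A}
          \<union> {v. v = z2 \<and> (z2, last(z1#qs)) \<in> A \<and> (z2, last(z1#mid)) \<in> A}"
    proof cases
      case 1
      have "(v, hd(mid @ z2 # rev qs)) \<in> A \<and> (v, last(mid @ z2 # rev qs)) \<in> A"
        using UP[OF dC1 lC1, of "[]" v "mid @ z2 # rev qs"] vU 1 by simp
      moreover have "last(mid @ z2 # rev qs) = hd(qs@[z2])" by (cases qs) auto
      ultimately show ?thesis using 1 by (cases mid) auto
    next
      case 2
      have "(v, hd(rev qs @ z1 # mid)) \<in> A \<and> (v, last(rev qs @ z1 # mid)) \<in> A"
        using UP[OF dC1 lC1, of "z1 # mid" v "rev qs"] vU 2 by simp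
      moreover have "hd(rev qs @ z1 # mid) = last(z1#qs)" by (cases qs rule: rev_cases) auto
      moreover have "last(rev qs @ z1 # mid) = last(z1#mid)" by simp
      ultimately show ?thesis using 2 by auto
    next
      case 3
      then obtain ma mb where md: "mid = ma @ v # mb" by (meson split_list)
      have "(v, hd(mb @ z2 # rev qs @ z1 # ma)) \<in> A \<and> (v, last(mb @ z2 # rev qs @ z1 # ma)) \<in> A"
        using UP[OF dC1 lC1, of "z1 # ma" v "mb @ z2 # rev qs"] vU md by simp
      moreover have "hd(mb @ z2 # rev qs @ z1 # ma) = hd(mb @ z2 # post @ pre @ z1 # ma)"
        by (cases mb) auto
      moreover have "last(mb @ z2 # rev qs @ z1 # ma) = last(mb @ z2 # post @ pre @ z1 # ma)"
        by simp
      ultimately have "v \<in> UU A vs"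
        using UP[OF dv lv, of "pre @ z1 # ma" v "mb @ z2 # post"] vs md by simp
      then show ?thesis using 3 by auto
    next
      case 4
      then obtain qa qb where qd: "qs = qa @ v # qb" by (meson split_list)
      have "(v, hd(rev qa @ z1 # mid @ z2 # rev qb)) \<in> A \<and> (v, last(rev qa @ z1 # mid @ z2 # rev qb)) \<in> A"
        using UP[OF dC1 lC1, of "z1 # mid @ z2 # rev qb" v "rev qa"] vU qd by simp
      moreover have "hd(rev qa @ z1 # mid @ z2 # rev qb) = last(z1#qa)" by (cases qa rule: rev_cases) auto
      moreover have "last(rev qa @ z1 # mid @ z2 # rev qb) = hd(qb@[z2])" by (cases qb) auto
      ultimately have "v \<in> peaks A (z1 # qs @ [z2])" using peak_decomp[OF qd] by simp
      then show ?thesis by auto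
    qed
  qed
  show "UU A ?C2 \<subseteq> (UU A vs \<inter> set (post@pre)) \<union> peaks A (z1 # qs @ [z2])
          \<union> {v. v = z1 \<and> (z1, hd(qs@[z2])) \<in> A \<and> (z1, last(z2#post@pre)) \<in> A}
          \<union> {v. v = z2 \<and> (z2, last(z1#qs)) \<in> A \<and> (z2, hd(post@pre@[z1])) \<in> A}"
  proof
    fix v assume vU: "v \<in> UU A ?C2"
    then have "v \<in> set ?C2" unfolding upper_nodes_def by auto
    then consider "v = z1" | "v = z2" | "v \<in> set post" | "v \<in> set pre" | "v \<in> set qs" by auto
    then show "v \<in> (UU A vs \<inter> set (post@pre)) \<union> peaks A (z1 # qs @ [z2])
          \<union> {v. v = z1 \<and> (z1, hd(qs@[z2])) \<in> A \<and> (z1, last(z2#post@pre)) \<in> A}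
          \<union> {v. v = z2 \<and> (z2, last(z1#qs)) \<in> A \<and> (z2, hd(post@pre@[z1])) \<in> A}"
    proof cases
      case 1
      have "(v, hd(qs @ z2 # post @ pre)) \<in> A \<and> (v, last(qs @ z2 # post @ pre)) \<in> A"
        using UP[OF dC2 lC2, of "z2 # post @ pre" v qs] vU 1 by simp
      moreover have "hd(qs @ z2 # post @ pre) = hd(qs@[z2])" by (cases qs) auto
      moreover have "last(qs @ z2 # post @ pre) = last(z2#post@pre)" by simp
      ultimately show ?thesis using 1 by auto
    next
      case 2
      have "(v, hd(post @ pre @ z1 # qs)) \<in> A \<and> (v, last(post @ pre @ z1 # qs)) \<in> A"
        using UP[OF dC2 lC2, of "[]" v "post @ pre @ z1 # qs"] vU 2 by simp
      moreover have "hd(post @ pre @ z1 # qs) = hd(post@pre@[z1])" using hd_app[of "post@pre" z1 qs] by simp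
      moreover have "last(post @ pre @ z1 # qs) = last(z1#qs)" by simp
      ultimately show ?thesis using 2 by auto
    next
      case 3
      then obtain pa pb where pd: "post = pa @ v # pb" by (meson split_list)
      have "(v, hd(pb @ pre @ z1 # qs @ z2 # pa)) \<in> A \<and> (v, last(pb @ pre @ z1 # qs @ z2 # pa)) \<in> A"
        using UP[OF dC2 lC2, of "z2 # pa" v "pb @ pre @ z1 # qs"] vU pd by simp
      moreover have "hd(pb @ pre @ z1 # qs @ z2 # pa) = hd(pb @ pre @ z1 # mid @ z2 # pa)"
        using hd_app[of "pb@pre" z1 "qs @ z2 # pa"] hd_app[of "pb@pre" z1 "mid @ z2 # pa"] by simp
      moreover have "last(pb @ pre @ z1 # qs @ z2 # pa) = last(pb @ pre @ z1 # mid @ z2 # pa)"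
        by simp
      ultimately have "v \<in> UU A vs"
        using UP[OF dv lv, of "pre @ z1 # mid @ z2 # pa" v pb] vs pd by simp
      then show ?thesis using 3 by auto
    next
      case 4
      then obtain ra rb where rd: "pre = ra @ v # rb" by (meson split_list)
      have "(v, hd(rb @ z1 # qs @ z2 # post @ ra)) \<in> A \<and> (v, last(rb @ z1 # qs @ z2 # post @ ra)) \<in> A"
        using UP[OF dC2 lC2, of "z2 # post @ ra" v "rb @ z1 # qs"] vU rd by simp
      moreover have "hd(rb @ z1 # qs @ z2 # post @ ra) = hd(rb @ z1 # mid @ z2 # post @ ra)"
        by (cases rb) auto
      moreover have "last(rb @ z1 # qs @ z2 # post @ ra) = last(rb @ z1 # mid @ z2 # post @ ra)"
        by simp
      ultimately have "v \<in> UU A vs"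
        using UP[OF dv lv, of ra v "rb @ z1 # mid @ z2 # post"] vs rd by simp
      then show ?thesis using 4 by auto
    next
      case 5
      then obtain qa qb where qd: "qs = qa @ v # qb" by (meson split_list)
      have "(v, hd(qb @ z2 # post @ pre @ z1 # qa)) \<in> A \<and> (v, last(qb @ z2 # post @ pre @ z1 # qa)) \<in> A"
        using UP[OF dC2 lC2, of "z2 # post @ pre @ z1 # qa" v qb] vU qd by simp
      moreover have "hd(qb @ z2 # post @ pre @ z1 # qa) = hd(qb@[z2])" by (cases qb) auto
      moreover have "last(qb @ z2 # post @ pre @ z1 # qa) = last(z1#qa)" by simp
      ultimately have "v \<in> peaks A (z1 # qs @ [z2])" using peak_decomp[OF qd] by simp
      then show ?thesis by auto
    qed
  qed
qed



lemma peaks_rev_sub: "peaks A (rev q) \<subseteq> peaks A q"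
proof
  fix v assume "v \<in> peaks A (rev q)"
  then obtain i where i: "v = rev q ! i" "0 < i" "Suc i < length q"
    "(rev q ! i, rev q ! (i-1)) \<in> A" "(rev q ! i, rev q ! Suc i) \<in> A"
    unfolding peaks_def by auto
  let ?n = "length q" let ?j = "?n - 1 - i"
  have e1: "rev q ! i = q ! ?j" using i by (simp add: rev_nth)
  have "?n - 1 - (i - 1) = Suc ?j" using i by simp
  then have e2: "rev q ! (i-1) = q ! Suc ?j" using i by (simp add: rev_nth)
  have e3: "rev q ! Suc i = q ! (?j - 1)" using i by (simp add: rev_nth)
  have "0 < ?j" "Suc ?j < ?n" using i by auto
  then show "v \<in> peaks A q" unfolding peaks_def using i e1 e2 e3
    by (intro CollectI exI[of _ ?j]) auto
qed

lemma peaks_rev: "peaks A (rev q) = peaks A q"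
  using peaks_rev_sub[of A q] peaks_rev_sub[of A "rev q"] by auto

lemma nbrs_sym: "w \<in> nbrs cs v \<longleftrightarrow> v \<in> nbrs cs w"
  unfolding nbrs_def by (simp add: insert_commute)

lemma split_sym:
  assumes cy: "cyc A vs" and z: "z1 \<in> set vs" "z2 \<in> set vs" "z1 \<noteq> z2"
    and dq: "distinct qs" and dj: "set qs \<inter> set vs = {}"
    and sq: "successively (adj A) (z1 # qs @ [z2])"
    and nq: "qs \<noteq> [] \<or> z2 \<notin> nbrs vs z1"
  shows "\<exists>C1 C2 a1 b1 a2 b2 S1 S2. cyc A C1 \<and> cyc A C2 \<and> set C1 \<subseteq> set vs \<union> set qs
    \<and> set C2 \<subseteq> set vs \<union> set qs \<and> S1 \<inter> S2 = {} \<and> z1 \<notin> S1 \<union> S2 \<and> z2 \<notin> S1 \<union> S2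
    \<and> nbrs vs z1 = {a1,b1} \<and> nbrs vs z2 = {a2,b2}
    \<and> UU A C1 \<subseteq> (UU A vs \<inter> S1) \<union> peaks A (z1 # qs @ [z2])
          \<union> {v. v = z1 \<and> (z1, hd(qs@[z2])) \<in> A \<and> (z1, a1) \<in> A}
          \<union> {v. v = z2 \<and> (z2, last(z1#qs)) \<in> A \<and> (z2, a2) \<in> A}
    \<and> UU A C2 \<subseteq> (UU A vs \<inter> S2) \<union> peaks A (z1 # qs @ [z2])
          \<union> {v. v = z1 \<and> (z1, hd(qs@[z2])) \<in> A \<and> (z1, b1) \<in> A}
          \<union> {v. v = z2 \<and> (z2, last(z1#qs)) \<in> A \<and> (z2, b2) \<in> A}"
proof -
  have dv: "distinct vs" using cy unfolding cyc_def by simp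
  obtain p1 r1 where vs1: "vs = p1 @ z1 # r1" using z(1) by (meson split_list)
  have "z2 \<in> set p1 \<or> z2 \<in> set r1" using z vs1 by auto
  then show ?thesis
  proof
    assume "z2 \<in> set r1"
    then obtain mid post where r1: "r1 = mid @ z2 # post" by (meson split_list)
    have vs: "vs = p1 @ z1 # mid @ z2 # post" using vs1 r1 by simp
    note sm = split_main[OF cy vs dq dj sq nq]
    have dd: "set mid \<inter> set (post @ p1) = {}" "z1 \<notin> set mid \<union> set (post @ p1)"
      "z2 \<notin> set mid \<union> set (post @ p1)" using dv vs by auto
    have ss: "set (z1 # mid @ z2 # rev qs) \<subseteq> set vs \<union> set qs"
      "set (z2 # post @ p1 @ z1 # qs) \<subseteq> set vs \<union> set qs" using vs by auto
    show ?thesis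
      apply (rule exI[of _ "z1 # mid @ z2 # rev qs"], rule exI[of _ "z2 # post @ p1 @ z1 # qs"])
      apply (rule exI[of _ "hd(mid@[z2])"], rule exI[of _ "last(z2#post@p1)"])
      apply (rule exI[of _ "last(z1#mid)"], rule exI[of _ "hd(post@p1@[z1])"])
      apply (rule exI[of _ "set mid"], rule exI[of _ "set (post @ p1)"])
      apply (intro conjI)
      apply (fact sm(1))
      apply (fact sm(2))
      apply (fact ss(1))
      apply (fact ss(2))
      apply (fact dd(1))
      apply (fact dd(2))
      apply (fact dd(3))
      apply (fact sm(3))
      apply (fact sm(4))
      apply (fact sm(5))
      apply (fact sm(6))
      done
  next
    assume "z2 \<in> set p1"
    then obtain pre mid where p1: "p1 = pre @ z2 # mid" by (meson split_list)
    have vs: "vs = pre @ z2 # mid @ z1 # r1" using vs1 p1 by simp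
    have dq': "distinct (rev qs)" using dq by simp
    have dj': "set (rev qs) \<inter> set vs = {}" using dj by simp
    have sq': "successively (adj A) (z2 # rev qs @ [z1])"
      using sq succ_adj_rev[of A "z1 # qs @ [z2]"] by simp
    have nq': "rev qs \<noteq> [] \<or> z1 \<notin> nbrs vs z2" using nq nbrs_sym[of z2 vs z1] by auto
    note sm = split_main[OF cy vs dq' dj' sq' nq']
    have pk: "peaks A (z2 # rev qs @ [z1]) = peaks A (z1 # qs @ [z2])"
      using peaks_rev[of A "z1 # qs @ [z2]"] by simp
    have h1: "hd(rev qs @ [z1]) = last(z1#qs)" by (cases qs rule: rev_cases) auto
    have h2: "last(z2 # rev qs) = hd(qs@[z2])" by (cases qs) auto
    have dd: "set mid \<inter> set (r1 @ pre) = {}" "z1 \<notin> set mid \<union> set (r1 @ pre)"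
      "z2 \<notin> set mid \<union> set (r1 @ pre)" using dv vs by auto
    have n1: "nbrs vs z1 = {last(z2#mid), hd(r1@pre@[z2])}" using sm(4) .
    have n2: "nbrs vs z2 = {hd(mid@[z1]), last(z1#r1@pre)}" using sm(3) .
    have U1: "UU A (z2 # mid @ z1 # rev (rev qs)) \<subseteq> (UU A vs \<inter> set mid) \<union> peaks A (z1 # qs @ [z2])
          \<union> {v. v = z1 \<and> (z1, hd(qs@[z2])) \<in> A \<and> (z1, last(z2#mid)) \<in> A}
          \<union> {v. v = z2 \<and> (z2, last(z1#qs)) \<in> A \<and> (z2, hd(mid@[z1])) \<in> A}"
      using sm(5) unfolding pk h1 h2 by blast
    have U2: "UU A (z1 # r1 @ pre @ z2 # rev qs) \<subseteq> (UU A vs \<inter> set (r1 @ pre)) \<union> peaks A (z1 # qs @ [z2])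
          \<union> {v. v = z1 \<and> (z1, hd(qs@[z2])) \<in> A \<and> (z1, hd(r1@pre@[z2])) \<in> A}
          \<union> {v. v = z2 \<and> (z2, last(z1#qs)) \<in> A \<and> (z2, last(z1#r1@pre)) \<in> A}"
      using sm(6) unfolding pk h1 h2 by blast
    have ss: "set (z2 # mid @ z1 # rev (rev qs)) \<subseteq> set vs \<union> set qs"
      "set (z1 # r1 @ pre @ z2 # rev qs) \<subseteq> set vs \<union> set qs" using vs by auto
    show ?thesis
      apply (rule exI[of _ "z2 # mid @ z1 # rev (rev qs)"], rule exI[of _ "z1 # r1 @ pre @ z2 # rev qs"])
      apply (rule exI[of _ "last(z2#mid)"], rule exI[of _ "hd(r1@pre@[z2])"])
      apply (rule exI[of _ "hd(mid@[z1])"], rule exI[of _ "last(z1#r1@pre)"])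
      apply (rule exI[of _ "set mid"], rule exI[of _ "set (r1 @ pre)"])
      apply (intro conjI)
      apply (fact sm(1))
      apply (fact sm(2))
      apply (fact ss(1))
      apply (fact ss(2))
      apply (fact dd(1))
      apply (fact dd(2))
      apply (fact dd(3))
      apply (fact n1)
      apply (fact n2)
      apply (fact U1)
      apply (fact U2)
      done
  qed
qed




abbreviation ch :: "('a \<times> 'a) set \<Rightarrow> 'a list \<Rightarrow> bool" where
  "ch A p \<equiv> successively (\<lambda>x y. (x,y) \<in> A) p"

lemma ch_rank: "(\<And>a b. (a,b) \<in> A \<Longrightarrow> f b < (f a :: nat)) \<Longrightarrow> ch A (x # xs) \<Longrightarrow> \<forall>y\<in>set xs. f y < f x"
proof (induction xs arbitrary: x)
  case Nil then show ?case by simp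
next
  case (Cons a xs)
  then have "(x,a) \<in> A" "ch A (a # xs)" by auto
  then have ih: "\<forall>y\<in>set xs. f y < f a" using Cons.IH[of a] Cons.prems(1) by blast
  have "f a < f x" using Cons.prems(1) \<open>(x,a) \<in> A\<close> by blast
  then show ?case using ih by auto
qed

lemma ch_distinct: "(\<And>a b. (a,b) \<in> A \<Longrightarrow> f b < (f a :: nat)) \<Longrightarrow> ch A p \<Longrightarrow> distinct p"
proof (induction p)
  case Nil then show ?case by simp
next
  case (Cons x xs)
  have "ch A xs" using Cons.prems(2) by (cases xs) auto
  moreover have "x \<notin> set xs" using ch_rank[of A f x xs] Cons.prems by auto
  ultimately show ?case using Cons by simp
qed

lemma rk_asy: "(\<And>a b. (a,b) \<in> A \<Longrightarrow> f b < (f a :: nat)) \<Longrightarrow> asy A"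
  unfolding asy_def by (meson less_asym)

lemma ch_reach: "ch A p \<Longrightarrow> p \<noteq> [] \<Longrightarrow> v \<in> set p \<Longrightarrow> (hd p, v) \<in> A\<^sup>*"
proof (induction p)
  case Nil then show ?case by simp
next
  case (Cons x xs)
  show ?case
  proof (cases "v = x")
    case True then show ?thesis by simp
  next
    case False
    then have "xs \<noteq> []" "v \<in> set xs" using Cons by auto
    then have "(x, hd xs) \<in> A" "ch A xs" using Cons.prems(1) by (auto simp: successively_Cons)
    then show ?thesis using Cons.IH \<open>xs \<noteq> []\<close> \<open>v \<in> set xs\<close> by auto
  qed
qed

lemma reach_ch: "(a,b) \<in> A\<^sup>* \<Longrightarrow> \<exists>p. p \<noteq> [] \<and> hd p = a \<and> last p = b \<and> ch A p"
proof (induction rule: converse_rtrancl_induct)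
  case base
  then show ?case by (intro exI[of _ "[b]"]) simp
next
  case (step y z)
  then obtain p where "p \<noteq> []" "hd p = z" "last p = b" "ch A p" by auto
  then show ?case using step by (intro exI[of _ "y # p"]) (auto simp: successively_Cons)
qed

lemma ch_last: "ch A (xs @ v # ys) \<Longrightarrow> xs \<noteq> [] \<Longrightarrow> (last xs, v) \<in> A"
  by (auto simp: successively_append_iff)

lemma ch_adj: "ch A p \<Longrightarrow> successively (adj A) p"
  by (erule successively_mono) (auto simp: adj_def)

lemma ch_suffix_reach: "ch A (xs @ y # ys) \<Longrightarrow> (y, last (y # ys)) \<in> A\<^sup>*"
proof -
  assume "ch A (xs @ y # ys)"
  then have "ch A (y # ys)" using succ_infix[of _ xs "y # ys" "[]"] by simp
  then show ?thesis using ch_reach[of A "y # ys" "last (y#ys)"] by simp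
qed

lemma lam_peaks:
  assumes "asy A" "ch A (l1 @ [m])" "ch A (l2 @ [m])"
  shows "peaks A (l1 @ m # rev l2) = {}"
proof -
  let ?q = "l1 @ m # rev l2" let ?r = "length l1"
  have "False" if i: "0 < i" "Suc i < length ?q" "(?q!i, ?q!(i-1)) \<in> A" "(?q!i, ?q!Suc i) \<in> A" for i
  proof (cases "i \<le> ?r")
    case True
    have le: "Suc (i-1) < length (l1 @ [m])" using True i(1) by simp
    have lt: "i - 1 < ?r" using True i(1) by simp
    have "((l1 @ [m]) ! (i-1), (l1 @ [m]) ! Suc (i-1)) \<in> A"
      using successively_nth[OF assms(2) le] by simp
    moreover have "(l1 @ [m]) ! (i-1) = ?q!(i-1)" using lt by (simp add: nth_append)
    moreover have "(l1 @ [m]) ! Suc (i-1) = ?q!i" using True i(1) by (simp add: nth_append)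
    ultimately have "(?q!(i-1), ?q!i) \<in> A" by simp
    then show False using i(3) assms(1) unfolding asy_def by blast
  next
    case False
    have ch2: "successively (\<lambda>x y. (y,x) \<in> A) (m # rev l2)"
      using assms(3) successively_rev[of "\<lambda>a b. (b,a) \<in> A" "l2 @ [m]"] by simp
    have le: "Suc (i - ?r) < length (m # rev l2)" using i(2) False by simp
    have "((m # rev l2) ! Suc (i - ?r), (m # rev l2) ! (i - ?r)) \<in> A"
      using successively_nth[OF ch2 le] by simp
    moreover have "?q ! i = (m # rev l2) ! (i - ?r)" using False by (simp add: nth_append)
    moreover have "?q ! Suc i = (m # rev l2) ! Suc (i - ?r)"
      using False by (simp add: nth_append Suc_diff_le)
    ultimately have "(?q ! Suc i, ?q ! i) \<in> A" by simp
    then show False using i(4) assms(1) unfolding asy_def by blast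
  qed
  then show ?thesis unfolding peaks_def by blast
qed

lemma V_peaks:
  assumes "asy A" "ch A (x # l1)" "ch A (x # l2)"
  shows "peaks A (rev l1 @ x # l2) \<subseteq> {x}"
proof -
  let ?q = "rev l1 @ x # l2" let ?r = "length l1"
  have "?q ! i = x" if i: "0 < i" "Suc i < length ?q" "(?q!i, ?q!(i-1)) \<in> A" "(?q!i, ?q!Suc i) \<in> A" for i
  proof -
    consider "i < ?r" | "i = ?r" | "?r < i" by linarith
    then show ?thesis
    proof cases
      case 1
      have ch1: "successively (\<lambda>a b. (b,a) \<in> A) (rev l1 @ [x])"
        using assms(2) successively_rev[of "\<lambda>a b. (b,a) \<in> A" "x # l1"] by simp
      have le: "Suc i < length (rev l1 @ [x])" using 1 by simp
      have "((rev l1 @ [x]) ! Suc i, (rev l1 @ [x]) ! i) \<in> A"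
        using successively_nth[OF ch1 le] by simp
      moreover have "(rev l1 @ [x]) ! i = ?q ! i" using 1 by (simp add: nth_append)
      moreover have "(rev l1 @ [x]) ! Suc i = ?q ! Suc i" using 1 by (simp add: nth_append)
      ultimately have "(?q ! Suc i, ?q ! i) \<in> A" by simp
      then show ?thesis using i(4) assms(1) unfolding asy_def by blast
    next
      case 2 then show ?thesis by (simp add: nth_append)
    next
      case 3
      have le: "Suc (i - 1 - ?r) < length (x # l2)" using i(2) 3 by simp
      have nl: "\<not> i - 1 < ?r" using 3 by simp
      have "((x # l2) ! (i - 1 - ?r), (x # l2) ! Suc (i - 1 - ?r)) \<in> A"
        using successively_nth[OF assms(3) le] by simp
      moreover have "?q ! (i-1) = (x # l2) ! (i - 1 - ?r)" using nl by (simp add: nth_append)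
      moreover have "?q ! i = (x # l2) ! Suc (i - 1 - ?r)"
        using 3 by (simp add: nth_append Suc_diff_le)
      ultimately have "(?q ! (i-1), ?q ! i) \<in> A" by simp
      then show ?thesis using i(3) assms(1) unfolding asy_def by blast
    qed
  qed
  then show ?thesis unfolding peaks_def by blast
qed

lemma ch_peaks: "asy A \<Longrightarrow> ch A (l1 @ [m]) \<Longrightarrow> peaks A (l1 @ [m]) = {}"
  using lam_peaks[of A l1 m "[]"] by simp




lemma UU_ne:
  assumes rk: "\<And>a b. (a,b) \<in> A \<Longrightarrow> f b < (f a :: nat)" and cy: "cyc A cs"
  shows "UU A cs \<noteq> {}"
proof -
  have dv: "distinct cs" and lv: "3 \<le> length cs" using cy unfolding cyc_def by auto
  have ne: "set cs \<noteq> {}" using lv by auto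
  let ?mx = "Max (f ` set cs)"
  have "?mx \<in> f ` set cs" using ne by (intro Max_in) auto
  then obtain v where v: "v \<in> set cs" "f v = ?mx" by auto
  have mx: "f w \<le> f v" if "w \<in> set cs" for w using that v by simp
  have "(v,w) \<in> A" if w: "w \<in> nbrs cs v" for w
  proof -
    have "adj A v w" using nbrs_adj[OF cy w] .
    moreover have "(w,v) \<notin> A" using rk[of w v] mx[of w] nbrs_in[OF w] by auto
    ultimately show ?thesis unfolding adj_def by auto
  qed
  then have "v \<in> UU A cs" using UPn[OF dv lv] v by auto
  then show ?thesis by auto
qed

lemma common_prefix:
  "p \<noteq> q \<Longrightarrow> distinct p \<Longrightarrow> distinct q \<Longrightarrow> p \<noteq> [] \<Longrightarrow> q \<noteq> [] \<Longrightarrow> hd p = hd q \<Longrightarrow> last p = last q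
   \<Longrightarrow> \<exists>a u p' q'. p = a @ u # p' \<and> q = a @ u # q' \<and> p' \<noteq> [] \<and> q' \<noteq> [] \<and> hd p' \<noteq> hd q'"
proof (induction p arbitrary: q)
  case Nil then show ?case by simp
next
  case (Cons x ps)
  obtain qs where q: "q = x # qs" using Cons.prems by (cases q) auto
  have ps: "ps \<noteq> []"
  proof
    assume "ps = []"
    then have "last q = x" using Cons.prems by simp
    then have "qs = []" using Cons.prems(3) q by (cases qs rule: rev_cases) auto
    then show False using Cons.prems(1) q \<open>ps = []\<close> by simp
  qed
  have qs: "qs \<noteq> []"
  proof
    assume "qs = []"
    then have "last (x # ps) = x" using Cons.prems q by simp
    then have "ps = []" using Cons.prems(2) by (cases ps rule: rev_cases) auto
    then show False using ps by simp
  qed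
  show ?case
  proof (cases "hd ps = hd qs")
    case False
    then show ?thesis using ps qs q by (intro exI[of _ "[]"]) auto
  next
    case True
    have "ps \<noteq> qs" using Cons.prems(1) q by simp
    moreover have "last ps = last qs" using Cons.prems(7) q ps qs by simp
    ultimately obtain a u p' q' where "ps = a @ u # p'" "qs = a @ u # q'" "p' \<noteq> []" "q' \<noteq> []" "hd p' \<noteq> hd q'"
      using Cons.IH[of qs] Cons.prems(2,3) q ps qs True by auto
    then show ?thesis using q by (intro exI[of _ "x # a"]) auto
  qed
qed

lemma diamond:
  assumes rk: "\<And>a b. (a,b) \<in> A \<Longrightarrow> f b < (f a :: nat)"
    and pq: "p \<noteq> q" "ch A p" "ch A q" "p \<noteq> []" "q \<noteq> []" "hd p = hd q" "last p = last q"
  shows "\<exists>C u. cyc A C \<and> set C \<subseteq> set p \<union> set q \<and> UU A C \<subseteq> {u}"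
proof -
  have as: "asy A" using rk_asy[of A f] rk by blast
  have dp: "distinct p" and dq: "distinct q" using ch_distinct[of A f] rk pq by blast+
  obtain a u p' q' where d: "p = a @ u # p'" "q = a @ u # q'" "p' \<noteq> []" "q' \<noteq> []" "hd p' \<noteq> hd q'"
    using common_prefix[OF pq(1) dp dq pq(4,5,6,7)] by blast
  have lp: "last p' \<in> set q'" using d pq(7) by simp
  obtain p1 m p2 where pd: "p' = p1 @ m # p2" "m \<in> set q'" "\<forall>y\<in>set p1. y \<notin> set q'"
    using split_list_first_propE[of p' "\<lambda>y. y \<in> set q'"] lp d(3) by (metis last_in_set)
  obtain q1 q2 where qd: "q' = q1 @ m # q2" using pd(2) by (meson split_list)
  let ?C = "u # p1 @ m # rev q1"
  have dp': "distinct (a @ u # p1 @ m # p2)" using dp d pd by simp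
  have dq': "distinct (a @ u # q1 @ m # q2)" using dq d qd by simp
  have dis: "set p1 \<inter> set q1 = {}" using pd(3) qd by auto
  have dC: "distinct ?C" using dp' dq' dis by auto
  have lC: "3 \<le> length ?C"
  proof -
    have "p1 \<noteq> [] \<or> q1 \<noteq> []" using d(5) pd(1) qd by auto
    then show ?thesis by (auto simp: Suc_le_eq)
  qed
  have c1: "ch A (u # p1 @ [m])" using pq(2) d(1) pd(1) succ_infix[of _ a "u # p1 @ [m]" p2] by simp
  have c2: "ch A (u # q1 @ [m])" using pq(3) d(2) qd succ_infix[of _ a "u # q1 @ [m]" q2] by simp
  have s2: "successively (adj A) (m # rev q1 @ [u])"
    using ch_adj[OF c2] succ_adj_rev[of A "u # q1 @ [m]"] by simp
  have "successively (adj A) (?C @ [hd ?C])"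
    using succ_join[of "adj A" "u # p1" m "rev q1 @ [u]"] ch_adj[OF c1] s2 by simp
  then have cC: "cyc A ?C" unfolding cyc_def using dC lC by simp
  have "UU A ?C \<subseteq> {u}"
  proof
    fix v assume vU: "v \<in> UU A ?C"
    then have "v \<in> set ?C" unfolding upper_nodes_def by auto
    then consider "v = u" | "v = m" | "v \<in> set p1" | "v \<in> set q1" by auto
    then show "v \<in> {u}"
    proof cases
      case 1 then show ?thesis by simp
    next
      case 2
      have "(v, last(rev q1 @ u # p1)) \<in> A" using UP[OF dC lC, of "u # p1" v "rev q1"] vU 2 by simp
      moreover have "(last (u # p1), m) \<in> A" using ch_last[of A "u # p1" m "[]"] c1 by simp
      ultimately show ?thesis using as 2 unfolding asy_def by simp
    next
      case 3
      then obtain pa pb where pp: "p1 = pa @ v # pb" by (meson split_list)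
      have "(v, last(pb @ m # rev q1 @ u # pa)) \<in> A"
        using UP[OF dC lC, of "u # pa" v "pb @ m # rev q1"] vU pp by simp
      moreover have "(last (u # pa), v) \<in> A" using ch_last[of A "u # pa" v "pb @ [m]"] c1 pp by simp
      ultimately show ?thesis using as unfolding asy_def by simp
    next
      case 4
      then obtain qa qb where qq: "q1 = qa @ v # qb" by (meson split_list)
      have "(v, hd(rev qa @ u # p1 @ m # rev qb)) \<in> A"
        using UP[OF dC lC, of "u # p1 @ m # rev qb" v "rev qa"] vU qq by simp
      moreover have "hd(rev qa @ u # p1 @ m # rev qb) = last (u # qa)"
        by (cases qa rule: rev_cases) auto
      moreover have "(last (u # qa), v) \<in> A" using ch_last[of A "u # qa" v "qb @ [m]"] c2 qq by simp
      ultimately show ?thesis using as unfolding asy_def by simp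
    qed
  qed
  moreover have "set ?C \<subseteq> set p \<union> set q" using d pd qd by auto
  ultimately show ?thesis using cC by blast
qed




lemma split_obt:
  assumes "cyc A vs" "z1 \<in> set vs" "z2 \<in> set vs" "z1 \<noteq> z2"
    "distinct qs" "set qs \<inter> set vs = {}"
    "successively (adj A) (z1 # qs @ [z2])"
    "qs \<noteq> [] \<or> z2 \<notin> nbrs vs z1"
  obtains C1 C2 a1 b1 a2 b2 S1 S2 where "cyc A C1" "cyc A C2" "set C1 \<subseteq> set vs \<union> set qs"
    "set C2 \<subseteq> set vs \<union> set qs" "S1 \<inter> S2 = {}" "z1 \<notin> S1 \<union> S2" "z2 \<notin> S1 \<union> S2"
    "nbrs vs z1 = {a1,b1}" "nbrs vs z2 = {a2,b2}"
    "UU A C1 \<subseteq> (UU A vs \<inter> S1) \<union> peaks A (z1 # qs @ [z2])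
          \<union> {v. v = z1 \<and> (z1, hd(qs@[z2])) \<in> A \<and> (z1, a1) \<in> A}
          \<union> {v. v = z2 \<and> (z2, last(z1#qs)) \<in> A \<and> (z2, a2) \<in> A}"
    "UU A C2 \<subseteq> (UU A vs \<inter> S2) \<union> peaks A (z1 # qs @ [z2])
          \<union> {v. v = z1 \<and> (z1, hd(qs@[z2])) \<in> A \<and> (z1, b1) \<in> A}
          \<union> {v. v = z2 \<and> (z2, last(z1#qs)) \<in> A \<and> (z2, b2) \<in> A}"
  using split_sym[OF assms] by (elim exE conjE) (rule that; assumption)

locale mc =
  fixes A :: "('a \<times> 'a) set" and f :: "'a \<Rightarrow> nat" and R :: "'a set" and vs :: "'a list"
  assumes rk: "\<And>a b. (a,b) \<in> A \<Longrightarrow> f b < f a"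
    and clo: "\<And>x y. x \<in> R \<Longrightarrow> (x,y) \<in> A\<^sup>* \<Longrightarrow> y \<in> R"
    and cy: "cyc A vs" and sub: "set vs \<subseteq> R"
    and minc: "\<And>ws. cyc A ws \<Longrightarrow> set ws \<subseteq> R \<Longrightarrow> card (UU A vs) \<le> card (UU A ws)"
begin

lemma as: "asy A" using rk_asy[of A f] rk by blast
lemma dv: "distinct vs" using cy unfolding cyc_def by simp
lemma lv: "3 \<le> length vs" using cy unfolding cyc_def by simp
lemma finU: "finite (UU A vs)" unfolding upper_nodes_def by simp
lemma Une: "UU A vs \<noteq> {}" using UU_ne[of A f vs] rk cy by blast

lemma less_contra: "cyc A ws \<Longrightarrow> set ws \<subseteq> R \<Longrightarrow> card (UU A ws) < card (UU A vs) \<Longrightarrow> False"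
  using minc by fastforce

lemma sub_contra:
  assumes "cyc A ws" "set ws \<subseteq> R" "UU A ws \<subseteq> UU A vs - {u}" "u \<in> UU A vs"
  shows False
proof -
  have "card (UU A ws) \<le> card (UU A vs - {u})" using assms(3) finU by (intro card_mono) auto
  also have "\<dots> < card (UU A vs)" by (rule card_Diff1_less[OF finU assms(4)])
  finally show False using less_contra assms(1,2) by blast
qed

lemma two_sides:
  assumes "cyc A C1" "set C1 \<subseteq> R" "cyc A C2" "set C2 \<subseteq> R"
    "UU A C1 \<subseteq> UU A vs \<inter> S1" "UU A C2 \<subseteq> UU A vs \<inter> S2" "S1 \<inter> S2 = {}"
  shows False
proof -
  have "card (UU A vs) \<le> card (UU A vs \<inter> S1)"
    using minc[OF assms(1,2)] card_mono[OF _ assms(5)] finU by (meson finite_Int le_trans)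
  then have e1: "UU A vs \<inter> S1 = UU A vs" using finU by (meson Int_lower1 card_seteq)
  have "card (UU A vs) \<le> card (UU A vs \<inter> S2)"
    using minc[OF assms(3,4)] card_mono[OF _ assms(6)] finU by (meson finite_Int le_trans)
  then have e2: "UU A vs \<inter> S2 = UU A vs" using finU by (meson Int_lower1 card_seteq)
  show False using e1 e2 assms(7) Une by blast
qed

lemma ch_in_R: "ch A p \<Longrightarrow> p \<noteq> [] \<Longrightarrow> hd p \<in> R \<Longrightarrow> set p \<subseteq> R"
  using ch_reach[of A p] clo by blast

lemma no_lower_exit:
  assumes l: "l \<in> LL A vs" and z: "z \<in> set vs" and r: "(l,z) \<in> A\<^sup>*"
  shows "z = l"
proof (rule ccontr)
  assume zl: "z \<noteq> l"
  have lv': "l \<in> set vs" using l unfolding lower_nodes_def by auto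
  have lowl: "\<forall>w\<in>nbrs vs l. (w,l) \<in> A" using LOWn[OF dv lv] l by blast
  obtain p where p: "p \<noteq> []" "hd p = l" "last p = z" "ch A p" using reach_ch[OF r] by blast
  have dp: "distinct p" using ch_distinct[of A f p] rk p(4) by blast
  obtain rest where pr: "p = l # rest" using p by (cases p) auto
  have "z \<in> set rest" using p(3) pr zl by (cases rest rule: rev_cases) auto
  then obtain ys z' zs where sp: "rest = ys @ z' # zs" "z' \<in> set vs" "\<forall>y\<in>set ys. y \<notin> set vs"
    using split_list_first_propE[of rest "\<lambda>y. y \<in> set vs"] z by blast
  have dp': "distinct (l # ys @ z' # zs)" using dp pr sp by simp
  have z'l: "l \<noteq> z'" using dp' by auto
  have cq: "ch A (l # ys @ [z'])" using p(4) pr sp succ_infix[of _ "[]" "l # ys @ [z']" zs] by simp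
  have dq: "distinct ys" using dp' by simp
  have dj: "set ys \<inter> set vs = {}" using sp by auto
  have nq: "ys \<noteq> [] \<or> z' \<notin> nbrs vs l"
  proof (rule ccontr)
    assume "\<not> ?thesis"
    then have "ys = []" "z' \<in> nbrs vs l" by auto
    then have "(z', l) \<in> A" "(l, z') \<in> A" using lowl cq by auto
    then show False using as unfolding asy_def by blast
  qed
  obtain C1 C2 a1 b1 a2 b2 S1 S2 where ss: "cyc A C1" "cyc A C2" "set C1 \<subseteq> set vs \<union> set ys"
    "set C2 \<subseteq> set vs \<union> set ys" "S1 \<inter> S2 = {}" "l \<notin> S1 \<union> S2" "z' \<notin> S1 \<union> S2"
    "nbrs vs l = {a1,b1}" "nbrs vs z' = {a2,b2}"
    "UU A C1 \<subseteq> (UU A vs \<inter> S1) \<union> peaks A (l # ys @ [z'])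
          \<union> {v. v = l \<and> (l, hd(ys@[z'])) \<in> A \<and> (l, a1) \<in> A}
          \<union> {v. v = z' \<and> (z', last(l#ys)) \<in> A \<and> (z', a2) \<in> A}"
    "UU A C2 \<subseteq> (UU A vs \<inter> S2) \<union> peaks A (l # ys @ [z'])
          \<union> {v. v = l \<and> (l, hd(ys@[z'])) \<in> A \<and> (l, b1) \<in> A}
          \<union> {v. v = z' \<and> (z', last(l#ys)) \<in> A \<and> (z', b2) \<in> A}"
    by (rule split_obt[OF cy lv' sp(2) z'l dq dj ch_adj[OF cq] nq])
  have pk: "peaks A (l # ys @ [z']) = {}" using ch_peaks[of A "l # ys" z'] as cq by simp
  have a1: "(l, a1) \<notin> A" "(l, b1) \<notin> A" using lowl ss(8) as unfolding asy_def by auto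
  have lz: "(z', last(l#ys)) \<notin> A" using ch_last[of A "l # ys" z' "[]"] cq as unfolding asy_def by auto
  have R1: "set ys \<subseteq> R"
  proof -
    have "set p \<subseteq> R" using ch_in_R[OF p(4) p(1)] p(2) lv' sub by auto
    then show ?thesis using pr sp by auto
  qed
  show False
  proof -
    have "set C1 \<subseteq> R" "set C2 \<subseteq> R" using ss(3,4) R1 sub by auto
    moreover have "UU A C1 \<subseteq> UU A vs \<inter> S1" using ss(10) pk a1 lz by blast
    moreover have "UU A C2 \<subseteq> UU A vs \<inter> S2" using ss(11) pk a1 lz by blast
    ultimately show False using two_sides[OF ss(1) _ ss(2) _ _ _ ss(5)] by blast
  qed
qed

lemma no_upper_entry:
  assumes u: "u \<in> UU A vs" and z: "z \<in> set vs" and r: "(z,u) \<in> A\<^sup>*"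
  shows "z = u"
proof (rule ccontr)
  assume zu: "z \<noteq> u"
  have uv: "u \<in> set vs" using u unfolding upper_nodes_def by auto
  have upu: "\<forall>w\<in>nbrs vs u. (u,w) \<in> A" using UPn[OF dv lv] u by blast
  obtain p where p: "p \<noteq> []" "hd p = z" "last p = u" "ch A p" using reach_ch[OF r] by blast
  have dp: "distinct p" using ch_distinct[of A f p] rk p(4) by blast
  obtain pp where ppd: "p = pp @ [u]" using p by (metis append_butlast_last_id)
  have "z \<in> set (rev pp)" using p(2) ppd zu by (cases pp) auto
  then obtain ys z' zs where sp: "rev pp = ys @ z' # zs" "z' \<in> set vs" "\<forall>y\<in>set ys. y \<notin> set vs"
    using split_list_first_propE[of "rev pp" "\<lambda>y. y \<in> set vs"] z by blast
  have pe: "p = rev zs @ z' # rev ys @ [u]"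
  proof -
    have "pp = rev (ys @ z' # zs)" using sp(1) by (metis rev_rev_ident)
    then show ?thesis using ppd by simp
  qed
  have dp': "distinct (rev zs @ z' # rev ys @ [u])" using dp pe by simp
  have z'u: "z' \<noteq> u" using dp' by auto
  have cq: "ch A (z' # rev ys @ [u])" using p(4) pe succ_infix[of _ "rev zs" "z' # rev ys @ [u]" "[]"] by simp
  have dq: "distinct (rev ys)" using dp' by simp
  have dj: "set (rev ys) \<inter> set vs = {}" using sp by auto
  have nq: "rev ys \<noteq> [] \<or> u \<notin> nbrs vs z'"
  proof (rule ccontr)
    assume "\<not> ?thesis"
    then have "ys = []" "z' \<in> nbrs vs u" using nbrs_sym[of u vs z'] by auto
    then have "(u, z') \<in> A" "(z', u) \<in> A" using upu cq by auto
    then show False using as unfolding asy_def by blast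
  qed
  obtain C1 C2 a1 b1 a2 b2 S1 S2 where ss: "cyc A C1" "cyc A C2" "set C1 \<subseteq> set vs \<union> set (rev ys)"
    "set C2 \<subseteq> set vs \<union> set (rev ys)" "S1 \<inter> S2 = {}" "z' \<notin> S1 \<union> S2" "u \<notin> S1 \<union> S2"
    "nbrs vs z' = {a1,b1}" "nbrs vs u = {a2,b2}"
    "UU A C1 \<subseteq> (UU A vs \<inter> S1) \<union> peaks A (z' # rev ys @ [u])
          \<union> {v. v = z' \<and> (z', hd(rev ys@[u])) \<in> A \<and> (z', a1) \<in> A}
          \<union> {v. v = u \<and> (u, last(z'#rev ys)) \<in> A \<and> (u, a2) \<in> A}"
    "UU A C2 \<subseteq> (UU A vs \<inter> S2) \<union> peaks A (z' # rev ys @ [u])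
          \<union> {v. v = z' \<and> (z', hd(rev ys@[u])) \<in> A \<and> (z', b1) \<in> A}
          \<union> {v. v = u \<and> (u, last(z'#rev ys)) \<in> A \<and> (u, b2) \<in> A}"
    by (rule split_obt[OF cy sp(2) uv z'u dq dj ch_adj[OF cq] nq])
  have pk: "peaks A (z' # rev ys @ [u]) = {}" using ch_peaks[of A "z' # rev ys" u] as cq by simp
  have lz: "(u, last(z'#rev ys)) \<notin> A" using ch_last[of A "z' # rev ys" u "[]"] cq as unfolding asy_def by auto
  have R1: "set (rev ys) \<subseteq> R"
  proof -
    have "set p \<subseteq> R" using ch_in_R[OF p(4) p(1)] p(2) z sub by auto
    then show ?thesis using pe by auto
  qed
  have RC: "set C1 \<subseteq> R" "set C2 \<subseteq> R" using ss(3,4) R1 sub by auto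
  have U1: "UU A C1 \<subseteq> (UU A vs \<inter> S1) \<union> {v. v = z' \<and> (z', a1) \<in> A}" using ss(10) pk lz by blast
  have U2: "UU A C2 \<subseteq> (UU A vs \<inter> S2) \<union> {v. v = z' \<and> (z', b1) \<in> A}" using ss(11) pk lz by blast
  show False
  proof (cases "z' \<in> UU A vs")
    case True
    then have "UU A C1 \<subseteq> UU A vs - {u}" using U1 ss(7) z'u by blast
    then show False using sub_contra[OF ss(1) RC(1) _ u] by blast
  next
    case False
    then obtain w where w: "w \<in> nbrs vs z'" "(z',w) \<notin> A" using UPn[OF dv lv] sp(2) by blast
    then have "w = a1 \<or> w = b1" using ss(8) by auto
    then show False
    proof
      assume "w = a1"
      then have "UU A C1 \<subseteq> UU A vs - {u}" using U1 ss(7) w by blast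
      then show False using sub_contra[OF ss(1) RC(1) _ u] by blast
    next
      assume "w = b1"
      then have "UU A C2 \<subseteq> UU A vs - {u}" using U2 ss(7) w by blast
      then show False using sub_contra[OF ss(2) RC(2) _ u] by blast
    qed
  qed
qed

end




context mc begin

lemma lam_contra:
  assumes l1: "l1 \<in> LL A vs" and l2: "l2 \<in> LL A vs" and ne: "l1 \<noteq> l2"
    and r1: "(l1,s) \<in> A\<^sup>*" and r2: "(l2,s) \<in> A\<^sup>*"
  shows False
proof -
  have l1v: "l1 \<in> set vs" and l2v: "l2 \<in> set vs" using l1 l2 unfolding lower_nodes_def by auto
  have low1: "\<forall>w\<in>nbrs vs l1. (w,l1) \<in> A" using LOWn[OF dv lv] l1 by blast
  have low2: "\<forall>w\<in>nbrs vs l2. (w,l2) \<in> A" using LOWn[OF dv lv] l2 by blast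
  obtain P1 where p1: "P1 \<noteq> []" "hd P1 = l1" "last P1 = s" "ch A P1" using reach_ch[OF r1] by blast
  obtain P2 where p2: "P2 \<noteq> []" "hd P2 = l2" "last P2 = s" "ch A P2" using reach_ch[OF r2] by blast
  have d1: "distinct P1" using ch_distinct[of A f P1] rk p1(4) by blast
  have d2: "distinct P2" using ch_distinct[of A f P2] rk p2(4) by blast
  have v1: "y = l1" if "y \<in> set P1" "y \<in> set vs" for y
    using no_lower_exit[OF l1 that(2)] ch_reach[OF p1(4) p1(1) that(1)] p1(2) by simp
  have v2: "y = l2" if "y \<in> set P2" "y \<in> set vs" for y
    using no_lower_exit[OF l2 that(2)] ch_reach[OF p2(4) p2(1) that(1)] p2(2) by simp
  obtain R1 where P1: "P1 = l1 # R1" using p1 by (cases P1) auto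
  obtain R2 where P2: "P2 = l2 # R2" using p2 by (cases P2) auto
  have sl1: "s \<noteq> l1"
  proof
    assume "s = l1"
    then have "s \<in> set P2" "s \<in> set vs" using p2 l1v by auto
    then show False using v2 ne \<open>s = l1\<close> by auto
  qed
  have sl2: "s \<noteq> l2"
  proof
    assume "s = l2"
    then have "s \<in> set P1" "s \<in> set vs" using p1 l2v by auto
    then show False using v1 ne \<open>s = l2\<close> by auto
  qed
  have sR1: "s \<in> set R1" using p1(3) P1 sl1 by (cases R1 rule: rev_cases) auto
  have sR2: "s \<in> set R2" using p2(3) P2 sl2 by (cases R2 rule: rev_cases) auto
  obtain ys m zs where sp: "R1 = ys @ m # zs" "m \<in> set R2" "\<forall>y\<in>set ys. y \<notin> set R2"
    using split_list_first_propE[of R1 "\<lambda>y. y \<in> set R2"] sR1 sR2 by blast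
  obtain y2 z2s where sp2: "R2 = y2 @ m # z2s" using sp(2) by (meson split_list)
  let ?qs = "ys @ m # rev y2"
  have dP1: "distinct (l1 # ys @ m # zs)" using d1 P1 sp by simp
  have dP2: "distinct (l2 # y2 @ m # z2s)" using d2 P2 sp2 by simp
  have c1: "ch A ((l1 # ys) @ [m])" using p1(4) P1 sp succ_infix[of _ "[]" "l1 # ys @ [m]" zs] by simp
  have c2: "ch A ((l2 # y2) @ [m])" using p2(4) P2 sp2 succ_infix[of _ "[]" "l2 # y2 @ [m]" z2s] by simp
  have qeq: "l1 # ?qs @ [l2] = (l1 # ys) @ m # rev (l2 # y2)" by simp
  have pk: "peaks A (l1 # ?qs @ [l2]) = {}" using lam_peaks[OF as c1 c2] qeq by simp
  have sq: "successively (adj A) (l1 # ?qs @ [l2])"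
  proof -
    have "successively (adj A) (m # rev (l2 # y2))"
      using ch_adj[OF c2] succ_adj_rev[of A "(l2 # y2) @ [m]"] by simp
    then show ?thesis using qeq succ_join[of "adj A" "l1 # ys" m "rev (l2 # y2)"] ch_adj[OF c1]
      by simp
  qed
  have dq: "distinct ?qs" using dP1 dP2 sp(3) sp2 by auto
  have dj: "set ?qs \<inter> set vs = {}"
  proof -
    have "y \<notin> set vs" if "y \<in> set ys \<or> y = m" for y
    proof
      assume "y \<in> set vs"
      then have "y = l1" using v1 that P1 sp by auto
      then show False using dP1 that by auto
    qed
    moreover have "y \<notin> set vs" if "y \<in> set y2" for y
    proof
      assume "y \<in> set vs"
      then have "y = l2" using v2 that P2 sp2 by auto
      then show False using dP2 that by auto
    qed
    ultimately show ?thesis by auto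
  qed
  have nq: "?qs \<noteq> [] \<or> l2 \<notin> nbrs vs l1" by simp
  obtain C1 C2 a1 b1 a2 b2 S1 S2 where ss: "cyc A C1" "cyc A C2" "set C1 \<subseteq> set vs \<union> set ?qs"
    "set C2 \<subseteq> set vs \<union> set ?qs" "S1 \<inter> S2 = {}" "l1 \<notin> S1 \<union> S2" "l2 \<notin> S1 \<union> S2"
    "nbrs vs l1 = {a1,b1}" "nbrs vs l2 = {a2,b2}"
    "UU A C1 \<subseteq> (UU A vs \<inter> S1) \<union> peaks A (l1 # ?qs @ [l2])
          \<union> {v. v = l1 \<and> (l1, hd(?qs@[l2])) \<in> A \<and> (l1, a1) \<in> A}
          \<union> {v. v = l2 \<and> (l2, last(l1#?qs)) \<in> A \<and> (l2, a2) \<in> A}"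
    "UU A C2 \<subseteq> (UU A vs \<inter> S2) \<union> peaks A (l1 # ?qs @ [l2])
          \<union> {v. v = l1 \<and> (l1, hd(?qs@[l2])) \<in> A \<and> (l1, b1) \<in> A}
          \<union> {v. v = l2 \<and> (l2, last(l1#?qs)) \<in> A \<and> (l2, b2) \<in> A}"
    by (rule split_obt[OF cy l1v l2v ne dq dj sq nq])
  have a1: "(l1, a1) \<notin> A" "(l1, b1) \<notin> A" using low1 ss(8) as unfolding asy_def by auto
  have a2: "(l2, a2) \<notin> A" "(l2, b2) \<notin> A" using low2 ss(9) as unfolding asy_def by auto
  have Rq: "set ?qs \<subseteq> R"
  proof -
    have "set P1 \<subseteq> R" using ch_in_R[OF p1(4) p1(1)] p1(2) l1v sub by auto
    moreover have "set P2 \<subseteq> R" using ch_in_R[OF p2(4) p2(1)] p2(2) l2v sub by auto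
    ultimately show ?thesis using P1 P2 sp sp2 by auto
  qed
  have "set C1 \<subseteq> R" "set C2 \<subseteq> R" using ss(3,4) Rq sub by auto
  moreover have "UU A C1 \<subseteq> UU A vs \<inter> S1" using ss(10) pk a1 a2 by blast
  moreover have "UU A C2 \<subseteq> UU A vs \<inter> S2" using ss(11) pk a1 a2 by blast
  ultimately show False using two_sides[OF ss(1) _ ss(2) _ _ _ ss(5)] by blast
qed

lemma V_contra:
  assumes u1: "u1 \<in> UU A vs" and u2: "u2 \<in> UU A vs" and ne: "u1 \<noteq> u2"
    and tR: "t \<in> R" and r1: "(t,u1) \<in> A\<^sup>*" and r2: "(t,u2) \<in> A\<^sup>*"
  shows False
proof -
  have u1v: "u1 \<in> set vs" and u2v: "u2 \<in> set vs" using u1 u2 unfolding upper_nodes_def by auto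
  obtain P1 where p1: "P1 \<noteq> []" "hd P1 = t" "last P1 = u1" "ch A P1" using reach_ch[OF r1] by blast
  obtain P2 where p2: "P2 \<noteq> []" "hd P2 = t" "last P2 = u2" "ch A P2" using reach_ch[OF r2] by blast
  have d1: "distinct P1" using ch_distinct[of A f P1] rk p1(4) by blast
  have d2: "distinct P2" using ch_distinct[of A f P2] rk p2(4) by blast
  have v1: "y = u1" if yP: "y \<in> set P1" and yv: "y \<in> set vs" for y
  proof -
    obtain xs ys where "P1 = xs @ y # ys" using yP by (meson split_list)
    then have "(y, u1) \<in> A\<^sup>*" using ch_suffix_reach[of A xs y ys] p1(3,4) by simp
    then show ?thesis using no_upper_entry[OF u1 yv] by simp
  qed
  have v2: "y = u2" if yP: "y \<in> set P2" and yv: "y \<in> set vs" for y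
  proof -
    obtain xs ys where "P2 = xs @ y # ys" using yP by (meson split_list)
    then have "(y, u2) \<in> A\<^sup>*" using ch_suffix_reach[of A xs y ys] p2(3,4) by simp
    then show ?thesis using no_upper_entry[OF u2 yv] by simp
  qed
  have u1P2: "u1 \<notin> set P2" using v2 u1v ne by auto
  have u2P1: "u2 \<notin> set P1" using v1 u2v ne by auto
  have "t \<in> set (rev P1)" using p1 hd_in_set[of P1] by simp
  moreover have "t \<in> set P2" using p2 hd_in_set[of P2] by simp
  ultimately
  obtain ys x zs where sp: "rev P1 = ys @ x # zs" "x \<in> set P2" "\<forall>y\<in>set ys. y \<notin> set P2"
    using split_list_first_propE[of "rev P1" "\<lambda>y. y \<in> set P2"] by blast
  have P1e: "P1 = rev zs @ x # rev ys"
  proof -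
    have "P1 = rev (ys @ x # zs)" using sp(1) by (metis rev_rev_ident)
    then show ?thesis by simp
  qed
  have xu1: "x \<noteq> u1" using sp(2) u1P2 by auto
  have "rev ys \<noteq> []" using P1e p1(3) xu1 by auto
  moreover have "last (rev ys) = u1" using P1e p1(3) \<open>rev ys \<noteq> []\<close> by simp
  ultimately have c1d: "rev ys = butlast (rev ys) @ [u1]" by (metis append_butlast_last_id)
  define c1 where "c1 = butlast (rev ys)"
  have c1d: "rev ys = c1 @ [u1]" using c1d c1_def by simp
  obtain a2 b2 where P2d: "P2 = a2 @ x # b2" using sp(2) by (meson split_list)
  have xu2: "x \<noteq> u2" using u2P1 P1e by auto
  have "b2 \<noteq> []" using P2d p2(3) xu2 by auto
  moreover have "last b2 = u2" using P2d p2(3) \<open>b2 \<noteq> []\<close> by simp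
  ultimately have c2d: "b2 = butlast b2 @ [u2]" by (metis append_butlast_last_id)
  define c2 where "c2 = butlast b2"
  have c2d: "b2 = c2 @ [u2]" using c2d c2_def by simp
  have P1f: "P1 = rev zs @ x # c1 @ [u1]" using P1e c1d by simp
  have P2f: "P2 = a2 @ x # c2 @ [u2]" using P2d c2d by simp
  have dP1: "distinct (rev zs @ x # c1 @ [u1])" using d1 P1f by simp
  have dP2: "distinct (a2 @ x # c2 @ [u2])" using d2 P2f by simp
  have ch1: "ch A (x # c1 @ [u1])" using p1(4) P1f succ_infix[of _ "rev zs" "x # c1 @ [u1]" "[]"] by simp
  have ch2: "ch A (x # c2 @ [u2])" using p2(4) P2f succ_infix[of _ a2 "x # c2 @ [u2]" "[]"] by simp
  let ?qs = "rev c1 @ x # c2"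
  have qeq: "u1 # ?qs @ [u2] = rev (c1 @ [u1]) @ x # (c2 @ [u2])" by simp
  have pk: "peaks A (u1 # ?qs @ [u2]) \<subseteq> {x}" using V_peaks[OF as ch1 ch2] qeq by simp
  have sq: "successively (adj A) (u1 # ?qs @ [u2])"
  proof -
    have "successively (adj A) ((u1 # rev c1) @ [x])"
      using ch_adj[OF ch1] succ_adj_rev[of A "x # c1 @ [u1]"] by simp
    then show ?thesis using succ_join[of "adj A" "u1 # rev c1" x "c2 @ [u2]"] ch_adj[OF ch2] by simp
  qed
  have "set ys = set (c1 @ [u1])" using c1d by (metis set_rev)
  then have c1ys: "set c1 \<subseteq> set ys" by auto
  have dq: "distinct ?qs" using dP1 dP2 c1ys sp(3) P2f by auto
  have xv: "x \<notin> set vs" using v1 P1f xu1 by auto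
  have dj: "set ?qs \<inter> set vs = {}"
  proof -
    have "y \<notin> set vs" if "y \<in> set c1" for y
      using v1[of y] P1f dP1 that by auto
    moreover have "y \<notin> set vs" if "y \<in> set c2" for y
      using v2[of y] P2f dP2 that by auto
    ultimately show ?thesis using xv by auto
  qed
  have nq: "?qs \<noteq> [] \<or> u2 \<notin> nbrs vs u1" by simp
  obtain C1 C2 a1 b1 a2' b2' S1 S2 where ss: "cyc A C1" "cyc A C2" "set C1 \<subseteq> set vs \<union> set ?qs"
    "set C2 \<subseteq> set vs \<union> set ?qs" "S1 \<inter> S2 = {}" "u1 \<notin> S1 \<union> S2" "u2 \<notin> S1 \<union> S2"
    "nbrs vs u1 = {a1,b1}" "nbrs vs u2 = {a2',b2'}"
    "UU A C1 \<subseteq> (UU A vs \<inter> S1) \<union> peaks A (u1 # ?qs @ [u2])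
          \<union> {v. v = u1 \<and> (u1, hd(?qs@[u2])) \<in> A \<and> (u1, a1) \<in> A}
          \<union> {v. v = u2 \<and> (u2, last(u1#?qs)) \<in> A \<and> (u2, a2') \<in> A}"
    "UU A C2 \<subseteq> (UU A vs \<inter> S2) \<union> peaks A (u1 # ?qs @ [u2])
          \<union> {v. v = u1 \<and> (u1, hd(?qs@[u2])) \<in> A \<and> (u1, b1) \<in> A}
          \<union> {v. v = u2 \<and> (u2, last(u1#?qs)) \<in> A \<and> (u2, b2') \<in> A}"
    by (rule split_obt[OF cy u1v u2v ne dq dj sq nq])
  have h1: "hd(?qs@[u2]) = last (x # c1)" by (cases c1 rule: rev_cases) auto
  have h2: "last(u1#?qs) = last (x # c2)" by simp
  have e1: "(u1, hd(?qs@[u2])) \<notin> A"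
    using h1 ch_last[of A "x # c1" u1 "[]"] ch1 as unfolding asy_def by auto
  have e2: "(u2, last(u1#?qs)) \<notin> A"
    using h2 ch_last[of A "x # c2" u2 "[]"] ch2 as unfolding asy_def by auto
  have Rq: "set ?qs \<subseteq> R"
  proof -
    have "set P1 \<subseteq> R" using ch_in_R[OF p1(4) p1(1)] p1(2) tR by auto
    moreover have "set P2 \<subseteq> R" using ch_in_R[OF p2(4) p2(1)] p2(2) tR by auto
    ultimately show ?thesis using P1f P2f by auto
  qed
  have RC: "set C1 \<subseteq> R" using ss(3) Rq sub by auto
  have U1: "UU A C1 \<subseteq> insert x (UU A vs - {u1, u2})" using ss(10) ss(6,7) pk e1 e2 by blast
  have k1: "card (UU A C1) \<le> card (insert x (UU A vs - {u1, u2}))"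
    using U1 finU by (intro card_mono) auto
  have k2: "card (insert x (UU A vs - {u1, u2})) \<le> Suc (card (UU A vs - {u1, u2}))"
    using finU by (simp add: card_insert_if)
  have sub2: "{u1,u2} \<subseteq> UU A vs" using u1 u2 by auto
  have k3: "card (UU A vs - {u1, u2}) = card (UU A vs) - card {u1,u2}"
    using sub2 finU by (intro card_Diff_subset) (auto intro: finite_subset)
  have k4: "card {u1,u2} = 2" using ne by simp
  have k5: "card {u1,u2} \<le> card (UU A vs)" using sub2 finU by (intro card_mono) auto
  have "card (UU A C1) < card (UU A vs)" using k1 k2 k3 k4 k5 by linarith
  then show False using less_contra[OF ss(1) RC] by blast
qed

end




lemma lin_rank:
  assumes sl: "simple_linearization n M C" and ab: "(a,b) \<in> arcs C"
  shows "card b < card a"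
proof -
  let ?P = "proper_monomials n M"
  have lin: "linearization n M C" and uq: "\<forall>m\<in>?P. \<exists>!c. c \<in> C \<and> \<Union>c = m" and cc: "card C = card ?P"
    using sl unfolding simple_linearization_def by auto
  have Msub: "M \<subseteq> Pow {1..n}" using lin unfolding linearization_def by auto
  have finM: "finite M" using finite_subset[OF Msub] by simp
  have Csub: "C \<subseteq> Pow M" using lin unfolding linearization_def by auto
  have finC: "finite C" using finite_subset[OF Csub] finM by (simp add: finite_Pow_iff)
  have finP: "finite ?P" using finM unfolding proper_monomials_def by simp
  have u1: "c1 = c2" if "m \<in> ?P" "c1 \<in> C" "\<Union>c1 = m" "c2 \<in> C" "\<Union>c2 = m" for m c1 c2
  proof -
    have ex: "\<exists>!c. c \<in> C \<and> \<Union>c = m" using bspec[OF uq that(1)] .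
    obtain c0 where c0: "c0 \<in> C \<and> \<Union>c0 = m" "\<forall>y. y \<in> C \<and> \<Union>y = m \<longrightarrow> y = c0"
      using ex by (rule ex1E) blast
    have "c1 = c0" using c0(2)[rule_format, of c1] that(2,3) by simp
    moreover have "c2 = c0" using c0(2)[rule_format, of c2] that(4,5) by simp
    ultimately show ?thesis by simp
  qed
  have u2: "\<exists>c\<in>C. \<Union>c = m" if "m \<in> ?P" for m
  proof -
    have ex: "\<exists>!c. c \<in> C \<and> \<Union>c = m" using bspec[OF uq that] .
    obtain c0 where c0: "c0 \<in> C \<and> \<Union>c0 = m"
      using ex by (rule ex1E) blast
    then show ?thesis by blast
  qed
  let ?C' = "{c \<in> C. \<Union>c \<in> ?P}"
  have inj: "inj_on Union ?C'" unfolding inj_on_def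
  proof (intro ballI impI)
    fix x y assume x: "x \<in> ?C'" and y: "y \<in> ?C'" and e: "\<Union>x = \<Union>y"
    have "\<Union>x \<in> ?P" "x \<in> C" "y \<in> C" using x y by auto
    then show "x = y" using u1[of "\<Union>x" x y] e by blast
  qed
  have img: "Union ` ?C' = ?P"
  proof
    show "Union ` ?C' \<subseteq> ?P" by blast
    show "?P \<subseteq> Union ` ?C'"
    proof
      fix m assume m: "m \<in> ?P"
      then obtain c where c: "c \<in> C" "\<Union>c = m" using u2 by blast
      then have cC: "c \<in> ?C'" using m by simp
      show "m \<in> Union ` ?C'" by (rule rev_image_eqI[OF cC]) (use c(2) in simp)
    qed
  qed
  have "card ?C' = card ?P" using card_image[OF inj] img by simp
  then have "card ?C' = card C" using cc by simp
  moreover have "?C' \<subseteq> C" by blast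
  ultimately have CC: "?C' = C" using card_subset_eq[OF finC] by blast
  obtain c where c: "c \<in> C" "a = \<Union>c" "b \<in> c" using ab unfolding arcs_def by auto
  have "c \<in> ?C'" by (simp only: CC c(1))
  then have "\<Union>c \<in> ?P" by blast
  then have aP: "a \<in> ?P" using c(2) by simp
  have cons: "\<forall>m\<in>?P. \<exists>c\<in>C. \<Union>c = m \<and> (\<forall>m'\<in>c. card m' < card m)"
    using lin unfolding linearization_def by simp
  obtain c' where c'1: "c' \<in> C" and c'2: "\<Union>c' = a \<and> (\<forall>m'\<in>c'. card m' < card a)"
    using bspec[OF cons aP] by (rule bexE)
  have c'3: "\<forall>m'\<in>c'. card m' < card a" using c'2 by (rule conjunct2)
  have "c' = c" by (rule u1[OF aP c'1 conjunct1[OF c'2] c(1) c(2)[symmetric]])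
  then have "b \<in> c'" using c(3) by simp
  then show ?thesis using c'3 by (rule bspec[rotated])
qed

lemma reach_M:
  assumes lin: "linearization n M C" and r: "(w,v) \<in> (arcs C)\<^sup>*" and w: "w \<in> M"
  shows "v \<in> M"
  using r
proof (induction rule: rtrancl_induct)
  case base then show ?case using w .
next
  case (step y z)
  then obtain c where "c \<in> C" "z \<in> c" unfolding arcs_def by auto
  then show ?case using lin unfolding linearization_def by blast
qed

lemma two_elems: "\<not> card S \<le> 1 \<Longrightarrow> \<exists>a b. a \<in> S \<and> b \<in> S \<and> a \<noteq> b"
proof -
  assume h: "\<not> card S \<le> 1"
  then have "S \<noteq> {}" by auto
  then obtain a where a: "a \<in> S" by auto
  show ?thesis
  proof (cases "S - {a} = {}")
    case True
    then have "S = {a}" using a by auto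
    then show ?thesis using h by simp
  next
    case False
    then show ?thesis using a by auto
  qed
qed

lemma dpath_ch: "dpath A p \<Longrightarrow> ch A p \<and> p \<noteq> []"
  unfolding dpath_def successively_conv_nth by auto

theorem lemma3p12:
  fixes n :: nat and M :: "nat set set" and C :: "nat set set set" and T :: "nat set set"
  assumes "simple_linearization n M C"
    and "T \<subseteq> proper_monomials n M"
    and "\<exists>V E. is_subgraph M C V E \<and> undirected_cycle V E \<and> V \<subseteq> succs C T"
  shows "\<exists>V E. is_subgraph M C V E \<and> undirected_cycle V E \<and> V \<subseteq> succs C T \<and>
     (card (upper_nodes V E) = 1 \<or>
      ((\<forall>s\<in>singletons n. \<forall>t\<in>T. \<forall>p q.
          dpath (arcs C) p \<and> hd p = t \<and> last p = s \<and>
          dpath (arcs C) q \<and> hd q = t \<and> last q = s \<longrightarrow> p = q) \<and>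
       (\<forall>s\<in>singletons n. card (preds C {s} \<inter> lower_nodes V E) \<le> 1) \<and>
       (\<forall>t\<in>T. card (succs C {t} \<inter> upper_nodes V E) \<le> 1)))"
proof -
  let ?A = "arcs C" let ?R = "succs C T"
  have rk: "\<And>a b. (a,b) \<in> ?A \<Longrightarrow> card b < card a" using lin_rank[OF assms(1)] by blast
  have as: "asy ?A" using rk_asy[of ?A card] rk by blast
  have lin: "linearization n M C" using assms(1) unfolding simple_linearization_def by simp
  have TM: "T \<subseteq> M" using assms(2) unfolding proper_monomials_def by auto
  have RM: "?R \<subseteq> M"
  proof
    fix v assume "v \<in> ?R"
    then obtain w where "w \<in> T" "(w,v) \<in> ?A\<^sup>*" unfolding succs_def by blast
    then show "v \<in> M" using reach_M[OF lin] TM by blast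
  qed
  have clo: "y \<in> ?R" if xR: "x \<in> ?R" and xy: "(x,y) \<in> ?A\<^sup>*" for x y
  proof -
    obtain w where w: "w \<in> T" "(w,x) \<in> ?A\<^sup>*" using xR unfolding succs_def by blast
    have "(w,y) \<in> ?A\<^sup>*" using w(2) xy by (rule rtrancl_trans)
    then show ?thesis unfolding succs_def using w(1) by blast
  qed
  have TR: "T \<subseteq> ?R" unfolding succs_def by auto
  obtain V E where VE: "is_subgraph M C V E" "undirected_cycle V E" "V \<subseteq> ?R" using assms(3) by blast
  have "\<exists>vs. distinct vs \<and> length vs \<ge> 3 \<and> set vs = V \<and>
        inj_on (\<lambda>(a,b). {a,b}) E \<and>
        (\<lambda>(a,b). {a,b}) ` E = {{vs ! i, vs ! (Suc i mod length vs)} | i. i < length vs}"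
    using VE(2) unfolding undirected_cycle_def .
  then obtain vs0 where h: "distinct vs0 \<and> length vs0 \<ge> 3 \<and> set vs0 = V \<and>
        inj_on (\<lambda>(a,b). {a,b}) E \<and>
        (\<lambda>(a,b). {a,b}) ` E = {{vs0 ! i, vs0 ! (Suc i mod length vs0)} | i. i < length vs0}"
    by (rule exE)
  have v01: "distinct vs0" using h by (rule conjunct1)
  have v02: "length vs0 \<ge> 3" using h[THEN conjunct2] by (rule conjunct1)
  have v03: "set vs0 = V" using h[THEN conjunct2, THEN conjunct2] by (rule conjunct1)
  have v04: "(\<lambda>(a,b). {a,b}) ` E = cP vs0" unfolding cP_def
    using h[THEN conjunct2, THEN conjunct2, THEN conjunct2] by (rule conjunct2)
  note v0 = v01 v02 v03 v04
  have EA: "E \<subseteq> ?A" using VE(1) unfolding is_subgraph_def by simp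
  have cy0: "cyc ?A vs0"
    unfolding cyc_idx
  proof (intro conjI allI impI)
    fix i assume i: "i < length vs0"
    then have "{vs0!i, vs0!(Suc i mod length vs0)} \<in> (\<lambda>(a,b). {a,b}) ` E"
      using v0(4) unfolding cP_def by blast
    then obtain a b where "(a,b) \<in> E" "{a,b} = {vs0!i, vs0!(Suc i mod length vs0)}" by auto
    then show "adj ?A (vs0!i) (vs0!(Suc i mod length vs0))"
      using EA unfolding adj_def by (auto simp: doubleton_eq_iff)
  qed (use v0 in auto)
  have "\<exists>ws. (cyc ?A ws \<and> set ws \<subseteq> ?R) \<and>
      (\<forall>y. cyc ?A y \<and> set y \<subseteq> ?R \<longrightarrow> card (UU ?A ws) \<le> card (UU ?A y))"
    using ex_has_least_nat[of "\<lambda>ws. cyc ?A ws \<and> set ws \<subseteq> ?R" vs0 "\<lambda>ws. card (UU ?A ws)"]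
      cy0 v0(3) VE(3) by blast
  then obtain ws where ws: "cyc ?A ws" "set ws \<subseteq> ?R"
    and mn: "\<And>y. cyc ?A y \<Longrightarrow> set y \<subseteq> ?R \<Longrightarrow> card (UU ?A ws) \<le> card (UU ?A y)" by blast
  interpret mc ?A card ?R ws
    using rk clo ws mn by unfold_locales auto
  have sg: "is_subgraph M C (set ws) (cycE ?A ws)"
    unfolding is_subgraph_def
  proof (intro conjI)
    show "set ws \<subseteq> M" using ws(2) RM by auto
    show "cycE ?A ws \<subseteq> ?A" unfolding cycE_def by auto
    show "\<forall>(a,b)\<in>cycE ?A ws. a \<in> set ws \<and> b \<in> set ws"
    proof (intro ballI, clarify)
      fix a b assume "(a,b) \<in> cycE ?A ws"
      then have "{a,b} \<in> cP ws" unfolding cycE_def by simp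
      then have "b \<in> nbrs ws a" unfolding nbrs_def by simp
      then have "b \<in> set ws \<and> a \<in> set ws" by (rule nbrs_in)
      then show "a \<in> set ws \<and> b \<in> set ws" by simp
    qed
  qed
  have uc: "undirected_cycle (set ws) (cycE ?A ws)" using cyc_undirected[OF ws(1) as] .
  show ?thesis
  proof (cases "card (UU ?A ws) = 1")
    case True
    then show ?thesis using sg uc ws(2) by blast
  next
    case False
    have k2: "2 \<le> card (UU ?A ws)" using False Une finU by (cases "card (UU ?A ws)") auto
    have c: "\<forall>s\<in>singletons n. \<forall>t\<in>T. \<forall>p q.
          dpath ?A p \<and> hd p = t \<and> last p = s \<and>
          dpath ?A q \<and> hd q = t \<and> last q = s \<longrightarrow> p = q"
    proof (intro ballI allI impI)
      fix s t p q
      assume t: "t \<in> T" and h: "dpath ?A p \<and> hd p = t \<and> last p = s \<and> dpath ?A q \<and> hd q = t \<and> last q = s"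
      show "p = q"
      proof (rule ccontr)
        assume pq: "p \<noteq> q"
        have p: "ch ?A p" "p \<noteq> []" and q: "ch ?A q" "q \<noteq> []" using dpath_ch h by blast+
        obtain Cy u where Cy: "cyc ?A Cy" "set Cy \<subseteq> set p \<union> set q" "UU ?A Cy \<subseteq> {u}"
          using diamond[of ?A card p q] rk pq p q h by metis
        have tR: "t \<in> ?R" using t TR by auto
        have "set p \<subseteq> ?R" using ch_in_R[OF p] h tR by simp
        moreover have "set q \<subseteq> ?R" using ch_in_R[OF q] h tR by simp
        ultimately have "set Cy \<subseteq> ?R" using Cy(2) by auto
        moreover have "card (UU ?A Cy) \<le> card {u}"
          using Cy(3) by (intro card_mono) auto
        ultimately show False using less_contra[OF Cy(1)] k2 by simp
      qed
    qed
    have d: "\<forall>s\<in>singletons n. card (preds C {s} \<inter> LL ?A ws) \<le> 1"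
    proof (intro ballI, rule ccontr)
      fix s assume "\<not> card (preds C {s} \<inter> LL ?A ws) \<le> 1"
      then obtain l1 l2 where "l1 \<in> preds C {s} \<inter> LL ?A ws" "l2 \<in> preds C {s} \<inter> LL ?A ws" "l1 \<noteq> l2"
        using two_elems by blast
      then show False using lam_contra[of l1 l2 s] unfolding preds_def by auto
    qed
    have e: "\<forall>t\<in>T. card (succs C {t} \<inter> UU ?A ws) \<le> 1"
    proof (intro ballI, rule ccontr)
      fix t assume t: "t \<in> T" and "\<not> card (succs C {t} \<inter> UU ?A ws) \<le> 1"
      then obtain u1 u2 where "u1 \<in> succs C {t} \<inter> UU ?A ws" "u2 \<in> succs C {t} \<inter> UU ?A ws" "u1 \<noteq> u2"
        using two_elems by blast
      then show False using V_contra[of u1 u2 t] t TR unfolding succs_def by auto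
    qed
    show ?thesis using sg uc ws(2) c d e by blast
  qed
qed


end
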